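(* Let $N,s,h$ be natural numbers with $s\ge \underline{s}:=h+\max(m_{sum},m_{lb})-1$, $N_{lb}\mid N$ and $L_{sb}\mid h$. Assume that $N,s,h,m_{sum},m_{lb},N_{lb},L_{sb},K_{sb}$, the sets $\alpha_{sb}(0),\ldots,\alpha_{sb}(K_{sb})$ and the function $f_{sb}$ are fixed (do not depend on $n$), and that the functions $f_{sum}$ and $f_{lb}$ are fixed and bounded. Let, for every $n$, the random variables $\varepsilon_1,\ldots,\varepsilon_n$ (with values in $\mathfrak{X}$) have an arbitrary joint distribution (a series scheme); all symbols $o_P(1)$ and all convergences below refer to these distributions as $n\to\infty$. Then $$T_{sum}=\sum_{k=1}^{N_{lb}}\mathcal{Y}_k^{(N,s,h)}(K_{sb}+2)+o_P(1),\quad n\to\infty.$$ If, moreover, there are $(K_{sb}+3)$-dimensional random vectors $\eta_1,\ldots,\eta_N$ such that $$\big(\mathcal{X}_1^{(N,s,h)},\ldots,\mathcal{X}_N^{(N,s,h)}\big)\xrightarrow{d}(\eta_1,\ldots,\eta_N),\quad n\to\infty$$ (joint convergence in distribution of all $N(K_{sb}+3)$ coordinates), then, as $n\to\infty$, $$T_{lb}=N_{lb}\sum_{k=1}^{N_{lb}}\Big(\mathcal{Y}_k^{(N,s,h)}(K_{sb}+1)\Big)^2+o_P(1),\qquad T_{sb}=L_{sb}\sum_{j=0}^{K_{sb}}\Big(\sum_{k=1}^{N_{lb}}\mathcal{Y}_k^{(N,s,h)}(j)\Big)^2+o_P(1),$$ $$\big(\mathcal{Y}_1^{(N,s,h)},\ldots,\mathcal{Y}_{N_{lb}}^{(N,s,h)}\big)\xrightarrow{d}(\zeta_1,\ldots,\zeta_{N_{lb}}),$$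 and consequently $$(T_{sum},T_{lb},T_{sb})\xrightarrow{d}\Bigg(\sum_{k=1}^{N_{lb}}\zeta_k(K_{sb}+2),\ N_{lb}\sum_{k=1}^{N_{lb}}\zeta_k^2(K_{sb}+1),\ L_{sb}\sum_{j=0}^{K_{sb}}\Big(\sum_{k=1}^{N_{lb}}\zeta_k(j)\Big)^2\Bigg),$$ where $\zeta_k=\sum_{i=1}^{N/N_{lb}}\eta_{\frac{N}{N_{lb}}(k-1)+i}$ for $1\le k\le N_{lb}$, with coordinates $\zeta_k(j)$, $0\le j\le K_{sb}+2$.
   Context: Let $\mathfrak{X}\subset\mathbb{R}^d$ (with the Borel $\sigma$-algebra) and let $\mathbf{P}_0$ be a fixed probability distribution on $\mathfrak{X}$. Hypothesis $H_0$: $\varepsilon_1,\ldots,\varepsilon_n$ are independent with common distribution $\mathbf{P}_0$; $\mathbf{E}_{H_0},\mathbf{D}_{H_0},\mathrm{cov}_{H_0},\mathbf{P}_{H_0}$ denote expectation, variance, covariance, probability computed under $H_0$. $[x]$ is the integer part. Fix natural numbers $m_{sum},m_{lb},N_{lb},L_{sb},K_{sb}$, measurable functions $f_{sum}:\mathfrak{X}^{m_{sum}}\to\mathbb{R}$, $f_{lb}:\mathfrak{X}^{m_{lb}}\to\mathbb{R}$, $f_{sb}:\mathfrak{X}^{L_{sb}}\to\mathbb{R}$, and a partition of $f_{sb}(\mathfrak{X}^{L_{sb}})$ into nonempty disjoint (measurable) sets $\alpha_{sb}(0),\ldots,\alpha_{sb}(K_{sb})$. Summing statistic: $E_{sum}=\mathbf{E}_{H_0}f_{sum}(\varepsilon_1,\ldots,\varepsilon_{m_{sum}})$,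 $\sigma_{sum}^2=\mathbf{D}_{H_0}f_{sum}(\varepsilon_1,\ldots,\varepsilon_{m_{sum}})+2\sum_{i=2}^{m_{sum}}\mathrm{cov}_{H_0}(f_{sum}(\varepsilon_i,\ldots,\varepsilon_{i+m_{sum}-1}),f_{sum}(\varepsilon_1,\ldots,\varepsilon_{m_{sum}}))$, $\sigma_{sum}\ge0$; assuming $\sigma_{sum}\in(0,\infty)$, $T_{sum}=\frac{\sum_{i=1}^{n-m_{sum}+1}(f_{sum}(\varepsilon_i,\ldots,\varepsilon_{i+m_{sum}-1})-E_{sum})}{\sigma_{sum}\sqrt{n-m_{sum}+1}}$. Long-block statistic: $L_{lb}=[n/N_{lb}]$, $W_k=\sum_{j=L_{lb}(k-1)+1}^{L_{lb}k-m_{lb}+1}f_{lb}(\varepsilon_j,\ldots,\varepsilon_{j+m_{lb}-1})$ ($1\le k\le N_{lb}$), $E_{lb},\sigma_{lb}\ge0$ defined from $f_{lb},m_{lb}$ exactly as $E_{sum},\sigma_{sum}$ from $f_{sum},m_{sum}$; assuming $\sigma_{lb}\in(0,\infty)$, $T_{lb}=\sum_{k=1}^{N_{lb}}\frac{(W_k-(L_{lb}-m_{lb}+1)E_{lb})^2}{L_{lb}\sigma_{lb}^2}$. Short-block statistic: $N_{sb}=[n/L_{sb}]$, $w(j)=\sum_{i=1}^{N_{sb}}I\{f_{sb}(\varepsilon_{L_{sb}(i-1)+1},\ldots,\varepsilon_{L_{sb}i})\in\alpha_{sb}(j)\}$, $E_{sb}(j)=\mathbf{P}_{H_0}(f_{sb}(\varepsilon_1,\ldots,\varepsilon_{L_{sb}})\in\alpha_{sb}(j))$;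 assuming all $E_{sb}(j)>0$, $T_{sb}=\sum_{j=0}^{K_{sb}}\frac{(w(j)-N_{sb}E_{sb}(j))^2}{N_{sb}E_{sb}(j)}$. It is a standing assumption that $\sigma_{sum},\sigma_{lb}\in(0,\infty)$ and $E_{sb}(j)>0$ for all $j$. Auxiliary vectors: $L=[n/N]$. For $\theta=(\theta_1,\ldots,\theta_s)\in\mathfrak{X}^s$ define $f^{(s)}(\theta)=(f_0^{(s)}(\theta),\ldots,f^{(s)}_{K_{sb}+2}(\theta))$ by: for $0\le j\le K_{sb}$, $f_j^{(s)}(\theta)=E_{sb}(j)^{-1/2}\sum_{u=1}^{h/L_{sb}}I\{f_{sb}(\theta_{L_{sb}(u-1)+1},\ldots,\theta_{L_{sb}u})\in\alpha_{sb}(j)\}$; $f^{(s)}_{K_{sb}+1}(\theta)=\sigma_{lb}^{-1}\sum_{u=1}^h f_{lb}(\theta_u,\ldots,\theta_{u+m_{lb}-1})$; $f^{(s)}_{K_{sb}+2}(\theta)=\sigma_{sum}^{-1}\sum_{u=1}^h f_{sum}(\theta_u,\ldots,\theta_{u+m_{sum}-1})$. For $1\le k\le N$, $0\le j\le K_{sb}+2$: $\mathcal{X}_k^{(N,s,h)}(j)=n^{-1/2}\sum_{i\in\mathbb{Z}:\ L(k-1)/h\le i\le (Lk-s)/h}\big(f_j^{(s)}(\varepsilon_{hi+1},\ldots,\varepsilon_{hi+s})-\mathbf{E}_{H_0}f_j^{(s)}(\varepsilon_1,\ldots,\varepsilon_s)\big)$ and $\mathcal{X}_k^{(N,s,h)}=(\mathcal{X}_k^{(N,s,h)}(0),\ldots,\mathcal{X}_k^{(N,s,h)}(K_{sb}+2))$.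 For $1\le k\le N_{lb}$: $\mathcal{Y}_k^{(N,s,h)}(j)=\sum_{i=1}^{N/N_{lb}}\mathcal{X}^{(N,s,h)}_{\frac{N}{N_{lb}}(k-1)+i}(j)$ and $\mathcal{Y}_k^{(N,s,h)}$ the corresponding vector. *)

theory Defs
  imports "HOL-Probability.Probability"
begin

text \<open>A tuple in X^m is represented as a function on indices 0..m-1
  (extensional, i.e. undefined outside {..<m}).  For a 1-based sequence x
  (x i = eps_i), win x a m is the tuple (x a, ..., x (a+m-1)).\<close>

definition win :: "(nat \<Rightarrow> 'a) \<Rightarrow> nat \<Rightarrow> nat \<Rightarrow> (nat \<Rightarrow> 'a)" where
  "win x a m = restrict (\<lambda>j. x (a + j)) {..<m}"

text \<open>Under H0 the sequence eps_1, eps_2, ... is the coordinate process of the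
  infinite product of copies of P0 (eps_i = omega i; the coordinate 0 is unused).\<close>

definition H0 :: "'a measure \<Rightarrow> (nat \<Rightarrow> 'a) measure" where
  "H0 P0 = PiM UNIV (\<lambda>_. P0)"

definition EH0 :: "'a measure \<Rightarrow> nat \<Rightarrow> ((nat \<Rightarrow> 'a) \<Rightarrow> real) \<Rightarrow> real" where
  "EH0 P0 m f = (\<integral>\<omega>. f (win \<omega> 1 m) \<partial>H0 P0)"

definition sig2H0 :: "'a measure \<Rightarrow> nat \<Rightarrow> ((nat \<Rightarrow> 'a) \<Rightarrow> real) \<Rightarrow> real" where
  "sig2H0 P0 m f =
     (\<integral>\<omega>. (f (win \<omega> 1 m) - EH0 P0 m f)\<^sup>2 \<partial>H0 P0)
     + 2 * (\<Sum>i=2..m. \<integral>\<omega>. (f (win \<omega> i m) - EH0 P0 m f) * (f (win \<omega> 1 m) - EH0 P0 m f) \<partial>H0 P0)"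

definition sigH0 :: "'a measure \<Rightarrow> nat \<Rightarrow> ((nat \<Rightarrow> 'a) \<Rightarrow> real) \<Rightarrow> real" where
  "sigH0 P0 m f = sqrt (sig2H0 P0 m f)"

definition Esb :: "'a measure \<Rightarrow> nat \<Rightarrow> ((nat \<Rightarrow> 'a) \<Rightarrow> real) \<Rightarrow> (nat \<Rightarrow> real set) \<Rightarrow> nat \<Rightarrow> real" where
  "Esb P0 Lsb fsb \<alpha> j = measure (H0 P0) {\<omega> \<in> space (H0 P0). fsb (win \<omega> 1 Lsb) \<in> \<alpha> j}"

definition Tsum :: "'a measure \<Rightarrow> nat \<Rightarrow> ((nat \<Rightarrow> 'a) \<Rightarrow> real) \<Rightarrow> nat \<Rightarrow> (nat \<Rightarrow> 'a) \<Rightarrow> real" where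
  "Tsum P0 msum fsm n x =
     (\<Sum>i=1..n + 1 - msum. fsm (win x i msum) - EH0 P0 msum fsm)
       / (sigH0 P0 msum fsm * sqrt (real (n + 1 - msum)))"

definition Wlb :: "nat \<Rightarrow> nat \<Rightarrow> ((nat \<Rightarrow> 'a) \<Rightarrow> real) \<Rightarrow> nat \<Rightarrow> (nat \<Rightarrow> 'a) \<Rightarrow> nat \<Rightarrow> real" where
  "Wlb Nlb mlb flb n x k =
     (let L = n div Nlb in \<Sum>j = L * (k - 1) + 1 .. L * k + 1 - mlb. flb (win x j mlb))"

definition Tlb :: "'a measure \<Rightarrow> nat \<Rightarrow> nat \<Rightarrow> ((nat \<Rightarrow> 'a) \<Rightarrow> real) \<Rightarrow> nat \<Rightarrow> (nat \<Rightarrow> 'a) \<Rightarrow> real" where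
  "Tlb P0 Nlb mlb flb n x =
     (let L = n div Nlb in
      \<Sum>k=1..Nlb. (Wlb Nlb mlb flb n x k - (real L - real mlb + 1) * EH0 P0 mlb flb)\<^sup>2
                   / (real L * (sigH0 P0 mlb flb)\<^sup>2))"

definition wsb :: "nat \<Rightarrow> ((nat \<Rightarrow> 'a) \<Rightarrow> real) \<Rightarrow> (nat \<Rightarrow> real set) \<Rightarrow> nat \<Rightarrow> (nat \<Rightarrow> 'a) \<Rightarrow> nat \<Rightarrow> real" where
  "wsb Lsb fsb \<alpha> n x j =
     (\<Sum>i=1..n div Lsb. if fsb (win x (Lsb * (i - 1) + 1) Lsb) \<in> \<alpha> j then 1 else 0)"

definition Tsb :: "'a measure \<Rightarrow> nat \<Rightarrow> nat \<Rightarrow> ((nat \<Rightarrow> 'a) \<Rightarrow> real) \<Rightarrow> (nat \<Rightarrow> real set)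
                   \<Rightarrow> nat \<Rightarrow> (nat \<Rightarrow> 'a) \<Rightarrow> real" where
  "Tsb P0 Lsb K fsb \<alpha> n x =
     (let Nsb = n div Lsb in
      \<Sum>j=0..K. (wsb Lsb fsb \<alpha> n x j - real Nsb * Esb P0 Lsb fsb \<alpha> j)\<^sup>2
                 / (real Nsb * Esb P0 Lsb fsb \<alpha> j))"

text \<open>fvec ... h j theta = f^(s)_j(theta) for a tuple theta = (theta_1,...,theta_s),
  represented 0-based: theta_u = theta (u - 1).\<close>

definition fvec :: "'a measure \<Rightarrow> nat \<Rightarrow> ((nat \<Rightarrow> 'a) \<Rightarrow> real) \<Rightarrow> nat \<Rightarrow> ((nat \<Rightarrow> 'a) \<Rightarrow> real)
                    \<Rightarrow> nat \<Rightarrow> nat \<Rightarrow> ((nat \<Rightarrow> 'a) \<Rightarrow> real) \<Rightarrow> (nat \<Rightarrow> real set)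
                    \<Rightarrow> nat \<Rightarrow> nat \<Rightarrow> (nat \<Rightarrow> 'a) \<Rightarrow> real" where
  "fvec P0 msum fsm mlb flb Lsb K fsb \<alpha> h j \<theta> =
     (if j \<le> K then
        (\<Sum>u=1..h div Lsb. if fsb (win \<theta> (Lsb * (u - 1)) Lsb) \<in> \<alpha> j then 1 else 0)
          / sqrt (Esb P0 Lsb fsb \<alpha> j)
      else if j = K + 1 then
        (\<Sum>u=1..h. flb (win \<theta> (u - 1) mlb)) / sigH0 P0 mlb flb
      else if j = K + 2 then
        (\<Sum>u=1..h. fsm (win \<theta> (u - 1) msum)) / sigH0 P0 msum fsm
      else 0)"

text \<open>Xcal ... N s h n x k j = X_k^(N,s,h)(j) computed from the sample x (x i = eps_i):
  the index i runs over the integers with L(k-1)/h <= i <= (Lk - s)/h, L = [n/N];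
  these are nonnegative, and i <= (Lk-s)/h iff h i + s <= L k.\<close>

definition Xcal :: "'a measure \<Rightarrow> nat \<Rightarrow> ((nat \<Rightarrow> 'a) \<Rightarrow> real) \<Rightarrow> nat \<Rightarrow> ((nat \<Rightarrow> 'a) \<Rightarrow> real)
                    \<Rightarrow> nat \<Rightarrow> nat \<Rightarrow> ((nat \<Rightarrow> 'a) \<Rightarrow> real) \<Rightarrow> (nat \<Rightarrow> real set)
                    \<Rightarrow> nat \<Rightarrow> nat \<Rightarrow> nat \<Rightarrow> nat \<Rightarrow> (nat \<Rightarrow> 'a) \<Rightarrow> nat \<Rightarrow> nat \<Rightarrow> real" where
  "Xcal P0 msum fsm mlb flb Lsb K fsb \<alpha> N s h n x k j =
     (let L = n div N;
          F = fvec P0 msum fsm mlb flb Lsb K fsb \<alpha> h j in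
      (1 / sqrt (real n)) *
        (\<Sum>i \<in> {i::nat. L * (k - 1) \<le> h * i \<and> h * i + s \<le> L * k}.
            F (win x (h * i + 1) s) - (\<integral>\<omega>. F (win \<omega> 1 s) \<partial>H0 P0)))"

definition Ycal :: "'a measure \<Rightarrow> nat \<Rightarrow> ((nat \<Rightarrow> 'a) \<Rightarrow> real) \<Rightarrow> nat \<Rightarrow> ((nat \<Rightarrow> 'a) \<Rightarrow> real)
                    \<Rightarrow> nat \<Rightarrow> nat \<Rightarrow> nat \<Rightarrow> ((nat \<Rightarrow> 'a) \<Rightarrow> real) \<Rightarrow> (nat \<Rightarrow> real set)
                    \<Rightarrow> nat \<Rightarrow> nat \<Rightarrow> nat \<Rightarrow> nat \<Rightarrow> (nat \<Rightarrow> 'a) \<Rightarrow> nat \<Rightarrow> nat \<Rightarrow> real" where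
  "Ycal P0 msum fsm mlb flb Nlb Lsb K fsb \<alpha> N s h n x k j =
     (\<Sum>i=1..N div Nlb.
        Xcal P0 msum fsm mlb flb Lsb K fsb \<alpha> N s h n x ((N div Nlb) * (k - 1) + i) j)"

text \<open>Q n is the probability space of the n-th series. oP1 Q Z: Z n = o_P(1).\<close>

definition oP1 :: "(nat \<Rightarrow> 'w measure) \<Rightarrow> (nat \<Rightarrow> 'w \<Rightarrow> real) \<Rightarrow> bool" where
  "oP1 Q Z \<longleftrightarrow>
     (\<forall>e>0. (\<lambda>n. measure (Q n) {\<omega> \<in> space (Q n). e < \<bar>Z n \<omega>\<bar>}) \<longlonglongrightarrow> 0)"

definition conv_distr :: "(nat \<Rightarrow> 'w measure) \<Rightarrow> (nat \<Rightarrow> 'w \<Rightarrow> 'v::topological_space) \<Rightarrow> 'v set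
                          \<Rightarrow> 'r measure \<Rightarrow> ('r \<Rightarrow> 'v) \<Rightarrow> bool" where
  "conv_distr Q V S R W \<longleftrightarrow>
     (\<forall>g :: 'v \<Rightarrow> real. continuous_on S g \<and> bounded (g ` S) \<longrightarrow>
        (\<lambda>n. \<integral>\<omega>. g (V n \<omega>) \<partial>Q n) \<longlonglongrightarrow> (\<integral>r. g (W r) \<partial>R))"

text \<open>A finite family of real coordinates indexed by I, embedded into the product
  space (index type 'i => real, product topology), zero outside I.\<close>

definition vec_on :: "'i set \<Rightarrow> ('i \<Rightarrow> real) \<Rightarrow> ('i \<Rightarrow> real)" where
  "vec_on I v = (\<lambda>i. if i \<in> I then v i else 0)"

definition supp_on :: "'i set \<Rightarrow> ('i \<Rightarrow> real) set" where
  "supp_on I = {v. \<forall>i. i \<notin> I \<longrightarrow> v i = 0}"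

end

theory Submission
  imports Defs
begin


definition Iset :: "nat \<Rightarrow> nat \<Rightarrow> nat \<Rightarrow> nat \<Rightarrow> nat set" where
  "Iset L h s k = {i. L * (k - 1) \<le> h * i \<and> h * i + s \<le> L * k}"

definition Aset :: "nat \<Rightarrow> nat \<Rightarrow> nat \<Rightarrow> nat \<Rightarrow> nat \<Rightarrow> nat set" where
  "Aset L h s h' k = (\<lambda>(i,u). h' * i + u) ` (Iset L h s k \<times> {1..h'})"

definition Inner :: "nat \<Rightarrow> nat \<Rightarrow> nat \<Rightarrow> nat \<Rightarrow> nat \<Rightarrow> nat set" where
  "Inner L h s p k = {t. L * (k - 1) + h < p * t \<and> p * t + s \<le> L * k}"

lemma finite_Iset: "h \<ge> 1 \<Longrightarrow> finite (Iset L h s k)"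
proof -
  assume h: "h \<ge> 1"
  have "Iset L h s k \<subseteq> {..L*k}"
  proof
    fix i assume "i \<in> Iset L h s k"
    then have "h * i \<le> L * k" by (auto simp: Iset_def)
    moreover have "i \<le> h * i" using h mult_le_mono1[of 1 h i] by simp
    ultimately show "i \<in> {..L*k}" by (meson atMost_iff le_trans)
  qed
  then show ?thesis using finite_subset by blast
qed

lemma finite_Aset: "h \<ge> 1 \<Longrightarrow> finite (Aset L h s h' k)"
  unfolding Aset_def using finite_Iset by auto

lemma inj_blk: "(h'::nat) \<ge> 1 \<Longrightarrow> inj_on (\<lambda>(i,u). h' * i + u) ((A::nat set) \<times> {1..h'})"
proof (rule inj_onI)
  fix x y assume h: "h' \<ge> 1" and x: "x \<in> A \<times> {1..h'}" and y: "y \<in> A \<times> {1..h'}"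
    and e0: "(\<lambda>(i,u). h' * i + u) x = (\<lambda>(i,u). h' * i + u) y"
  obtain i u where xi: "x = (i,u)" by force
  obtain i' u' where yi: "y = (i',u')" by force
  have u: "1 \<le> u" "u \<le> h'" and u': "1 \<le> u'" "u' \<le> h'" using x y xi yi by auto
  have e: "h' * i + u = h' * i' + u'" using e0 xi yi by simp
  have d: "(h' * j + r) div h' = j" if "r < h'" for j r using that by simp
  have "(h' * i + (u - 1)) div h' = i" using u h by (intro d) simp
  moreover have "(h' * i' + (u' - 1)) div h' = i'" using u' h by (intro d) simp
  moreover have "h' * i + (u - 1) = h' * i' + (u' - 1)" using e u u' by simp
  ultimately have "i = i'" by metis
  then show "x = y" using e xi yi by simp
qed

lemma sum_Aset:
  assumes "h' \<ge> 1" "h \<ge> 1"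
  shows "(\<Sum>i\<in>Iset L h s k. \<Sum>u=1..h'. G (h' * i + u)) = (\<Sum>t\<in>Aset L h s h' k. G t)"
proof -
  have "(\<Sum>i\<in>Iset L h s k. \<Sum>u=1..h'. G (h' * i + u))
      = (\<Sum>(i,u)\<in>Iset L h s k \<times> {1..h'}. G (h' * i + u))"
    by (simp add: sum.cartesian_product)
  also have "\<dots> = (\<Sum>t\<in>Aset L h s h' k. G t)"
    unfolding Aset_def
    by (subst sum.reindex[OF inj_blk[OF assms(1)]]) (simp add: case_prod_beta')
  finally show ?thesis .
qed

lemma Aset_bounds:
  assumes "h = p * h'" "t \<in> Aset L h s h' k" "p \<ge> 1"
  shows "L * (k - 1) < p * t \<and> p * t + s \<le> L * k + h"
proof -
  obtain i u where t: "t = h' * i + u" and i: "L * (k - 1) \<le> h * i" "h * i + s \<le> L * k"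
    and u: "1 \<le> u" "u \<le> h'"
    using assms(2) by (auto simp: Aset_def Iset_def)
  have pt: "p * t = h * i + p * u" using t assms(1) by (simp add: algebra_simps)
  have "p * u \<ge> 1" using u assms(3) by simp
  moreover have "p * u \<le> h" using u assms(1) by simp
  ultimately show ?thesis using pt i by linarith
qed

lemma Aset_inner:
  assumes "h = p * h'" "h' \<ge> 1" "p \<ge> 1" "t \<in> Inner L h s p k"
  shows "t \<in> Aset L h s h' k"
proof -
  have a: "L * (k - 1) + h < p * t" "p * t + s \<le> L * k" using assms(4) by (auto simp: Inner_def)
  then have "t \<ge> 1" by (cases t) auto
  define i where "i = (t - 1) div h'"
  define u where "u = (t - 1) mod h' + 1"
  have tu: "h' * i + u = t" unfolding i_def u_def using \<open>t \<ge> 1\<close>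
    by (metis Suc_eq_plus1 add.assoc add.commute le_add_diff_inverse mult_div_mod_eq)
  have u: "1 \<le> u" "u \<le> h'" using assms(2) unfolding u_def
    by (auto simp: Suc_le_eq)
  have pt: "p * t = h * i + p * u" using tu assms(1) by (metis add_mult_distrib2 mult.assoc)
  have "p * u \<le> h" using u assms(1) by simp
  moreover have "p * u \<ge> 1" using u assms(3) by simp
  ultimately have "L * (k - 1) \<le> h * i" "h * i + s \<le> L * k" using pt a by linarith+
  then have "i \<in> Iset L h s k" by (simp add: Iset_def)
  then show ?thesis unfolding Aset_def using u tu by force
qed

lemma Aset_disj:
  assumes "h = p * h'" "p \<ge> 1" "s \<ge> h" "k1 \<ge> 1" "k2 \<ge> 1" "k1 \<noteq> k2"
  shows "Aset L h s h' k1 \<inter> Aset L h s h' k2 = {}"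
proof (rule ccontr)
  assume "\<not> ?thesis"
  then obtain t where t1: "t \<in> Aset L h s h' k1" and t2: "t \<in> Aset L h s h' k2" by blast
  note b1 = Aset_bounds[OF assms(1) t1 assms(2)] and b2 = Aset_bounds[OF assms(1) t2 assms(2)]
  show False
  proof (cases "k1 < k2")
    case True
    then have "L * k1 \<le> L * (k2 - 1)" by (intro mult_le_mono2) linarith
    then show False using b1 b2 assms(3) by linarith
  next
    case False
    then have "k2 < k1" using assms(6) by simp
    then have "L * k2 \<le> L * (k1 - 1)" by (intro mult_le_mono2) linarith
    then show False using b1 b2 assms(3) by linarith
  qed
qed

lemma card_Inner:
  assumes "p \<ge> 1" "k \<ge> 1" "L \<ge> s + h"
  shows "real (card (Inner L h s p k)) \<ge> (real L - real s - real h) / real p - 1"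
proof -
  define a where "a = L * (k - 1) + h"
  define b where "b = L * k - s"
  have Lk: "L * k = L * (k - 1) + L" using assms(2) by (cases k) auto
  have ab: "real b - real a = real L - real s - real h"
    using assms(3) Lk unfolding a_def b_def by (simp add: of_nat_diff)
  have eq: "Inner L h s p k = {a div p + 1 .. b div p}"
  proof (intro set_eqI iffI)
    fix t assume "t \<in> Inner L h s p k"
    then have t: "a < p * t" "p * t \<le> b" unfolding Inner_def a_def b_def by auto
    have "p * (a div p) \<le> a" by simp
    then have "a div p < t" using t(1) assms(1)
      by (metis le_less_trans mult_less_cancel1)
    then have "a div p + 1 \<le> t" by simp
    moreover have "t \<le> b div p" using t(2) assms(1)
      by (simp add: less_eq_div_iff_mult_less_eq mult.commute)
    ultimately show "t \<in> {a div p + 1 .. b div p}" by simp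
  next
    fix t assume t: "t \<in> {a div p + 1 .. b div p}"
    then have "t \<le> b div p" by simp
    then have "p * t \<le> b" using assms(1) by (simp add: less_eq_div_iff_mult_less_eq mult.commute)
    moreover have "a < p * t"
    proof -
      have "a div p < t" using t by simp
      then show ?thesis using assms(1)
        by (metis div_less_iff_less_mult mult.commute zero_less_one less_le_trans)
    qed
    ultimately show "t \<in> Inner L h s p k" unfolding Inner_def a_def b_def by auto
  qed
  have c: "real (card (Inner L h s p k)) \<ge> real (b div p) - real (a div p)"
    unfolding eq by simp
  have "real p * real (a div p) \<le> real a"
    by (metis of_nat_le_iff of_nat_mult times_div_less_eq_dividend)
  then have r1: "real (a div p) \<le> real a / real p" using assms(1)
    by (simp add: field_simps)
  have "b < p * (b div p) + p" using assms(1)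
    by (metis add.commute div_mult_mod_eq mod_less_divisor mult.commute nat_add_left_cancel_less zero_less_one less_le_trans)
  then have "real b < real p * real (b div p) + real p" by (metis of_nat_add of_nat_less_iff of_nat_mult)
  then have r2: "real (b div p) > real b / real p - 1" using assms(1)
    by (simp add: field_simps)
  have "(real L - real s - real h) / real p - 1 = real b / real p - 1 - real a / real p"
    by (simp add: ab[symmetric] diff_divide_distrib)
  then show ?thesis using c r1 r2 by linarith
qed

lemma sum_outer:
  fixes G :: "nat \<Rightarrow> real"
  assumes "finite Out" "S \<subseteq> Out" "T \<subseteq> Out" "\<And>t. t \<in> Out \<Longrightarrow> \<bar>G t\<bar> \<le> B"
  shows "\<bar>sum G S - sum G T\<bar> \<le> B * (real (card Out) - real (card S)) + B * (real (card Out) - real (card T))"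
proof -
  have fS: "finite S" "finite T" using assms(1,2,3) by (auto intro: finite_subset)
  have dS: "sum G Out = sum G S + sum G (Out - S)"
    using sum.subset_diff[OF assms(2,1), where g=G] by simp
  have dT: "sum G Out = sum G T + sum G (Out - T)"
    using sum.subset_diff[OF assms(3,1), where g=G] by simp
  have b: "\<bar>sum G (Out - A)\<bar> \<le> B * (real (card Out) - real (card A))" if "A \<subseteq> Out" for A
  proof -
    have "\<bar>sum G (Out - A)\<bar> \<le> sum (\<lambda>t. \<bar>G t\<bar>) (Out - A)" by (rule sum_abs)
    also have "\<dots> \<le> sum (\<lambda>t. B) (Out - A)" by (rule sum_mono) (use assms(4) in auto)
    also have "\<dots> = B * real (card (Out - A))" by simp
    also have "card (Out - A) = card Out - card A" using card_Diff_subset[of A Out] that assms(1) finite_subset by auto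
    also have "real (card Out - card A) = real (card Out) - real (card A)"
      using card_mono[OF assms(1) that] by simp
    finally show ?thesis .
  qed
  have "sum G S - sum G T = sum G (Out - T) - sum G (Out - S)" using dS dT by simp
  then show ?thesis using b[OF assms(2)] b[OF assms(3)] by linarith
qed


lemma union_sum:
  assumes "h = p * h'" "p \<ge> 1" "s \<ge> h" "h \<ge> 1" "finite KK" "\<And>k. k \<in> KK \<Longrightarrow> k \<ge> 1"
  shows "(\<Sum>k\<in>KK. \<Sum>t\<in>Aset L h s h' k. G t) = (\<Sum>t\<in>(\<Union>k\<in>KK. Aset L h s h' k). G t)"
  by (rule sum.UNION_disjoint[symmetric])
     (use assms finite_Aset Aset_disj in auto)

lemma union_card:
  assumes "h = p * h'" "p \<ge> 1" "s \<ge> h" "h' \<ge> 1" "finite KK" "\<And>k. k \<in> KK \<Longrightarrow> k \<ge> 1"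
    "L \<ge> s + h"
  shows "real (card (\<Union>k\<in>KK. Aset L h s h' k)) \<ge> real (card KK) * ((real L - real s - real h) / real p - 1)"
proof -
  have h1: "h \<ge> 1" using assms(1,2,4) by simp
  have sub: "Inner L h s p k \<subseteq> Aset L h s h' k" for k
    using Aset_inner[OF assms(1,4,2)] by blast
  have fin: "finite (Inner L h s p k)" for k
    using finite_subset[OF sub finite_Aset[OF h1]] .
  have "card (\<Union>k\<in>KK. Inner L h s p k) = (\<Sum>k\<in>KK. card (Inner L h s p k))"
  proof (rule card_UN_disjoint[OF assms(5)])
    show "\<forall>i\<in>KK. finite (Inner L h s p i)" using fin by blast
    show "\<forall>i\<in>KK. \<forall>j\<in>KK. i \<noteq> j \<longrightarrow> Inner L h s p i \<inter> Inner L h s p j = {}"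
      using Aset_disj[OF assms(1,2,3)] assms(6) sub by blast
  qed
  then have "real (card (\<Union>k\<in>KK. Inner L h s p k)) = (\<Sum>k\<in>KK. real (card (Inner L h s p k)))"
    by simp
  also have "\<dots> \<ge> (\<Sum>k\<in>KK. (real L - real s - real h) / real p - 1)"
    by (rule sum_mono) (use card_Inner[OF assms(2) _ assms(7)] assms(6) in auto)
  finally have a: "real (card (\<Union>k\<in>KK. Inner L h s p k)) \<ge> real (card KK) * ((real L - real s - real h) / real p - 1)"
    by simp
  have "card (\<Union>k\<in>KK. Inner L h s p k) \<le> card (\<Union>k\<in>KK. Aset L h s h' k)"
  proof (rule card_mono)
    show "finite (\<Union>k\<in>KK. Aset L h s h' k)" using assms(5) finite_Aset[OF h1] by blast
    show "(\<Union>k\<in>KK. Inner L h s p k) \<subseteq> (\<Union>k\<in>KK. Aset L h s h' k)" using sub by (meson UN_mono order_refl)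
  qed
  then show ?thesis using a by linarith
qed


lemma sqrt_lemma:
  fixes a n :: real
  assumes "1 \<le> a" "a \<le> n" "n \<le> 2 * a"
  shows "0 \<le> 1 / sqrt a - 1 / sqrt n \<and> 1 / sqrt a - 1 / sqrt n \<le> 2 * (n - a) / (n * sqrt n)"
proof -
  have sa: "sqrt a > 0" "sqrt n > 0" using assms by auto
  have sle: "sqrt a \<le> sqrt n" using assms by simp
  have "1 / sqrt a - 1 / sqrt n = (sqrt n - sqrt a) / (sqrt a * sqrt n)"
    using sa by (simp add: field_simps)
  also have "sqrt n - sqrt a = (n - a) / (sqrt n + sqrt a)"
  proof -
    have "(sqrt n - sqrt a) * (sqrt n + sqrt a) = sqrt n * sqrt n - sqrt a * sqrt a"
      by (simp add: algebra_simps)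
    also have "\<dots> = n - a" using assms by simp
    finally have "(sqrt n - sqrt a) * (sqrt n + sqrt a) = n - a" .
    moreover have "sqrt n + sqrt a > 0" using sa by linarith
    ultimately show ?thesis by (simp add: eq_divide_eq)
  qed
  finally have e: "1 / sqrt a - 1 / sqrt n = (n - a) / ((sqrt n + sqrt a) * (sqrt a * sqrt n))"
    by simp
  have na: "n - a \<ge> 0" using assms by simp
  have "sqrt n \<le> 2 * sqrt a"
  proof -
    have "sqrt n \<le> sqrt (4 * a)" using assms by simp
    also have "sqrt (4 * a) = 2 * sqrt a" by (simp add: real_sqrt_mult)
    finally show ?thesis .
  qed
  then have d: "(sqrt n + sqrt a) * (sqrt a * sqrt n) \<ge> sqrt n * (sqrt n / 2 * sqrt n)"
    using sa by (intro mult_mono) auto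
  have eqq: "sqrt n * (sqrt n / 2 * sqrt n) = n * sqrt n / 2"
    using assms by (simp add: field_simps)
  have d2: "(sqrt n + sqrt a) * (sqrt a * sqrt n) \<ge> n * sqrt n / 2" using d eqq by linarith
  have pos: "n * sqrt n / 2 > 0" using sa assms by simp
  have "(n - a) / ((sqrt n + sqrt a) * (sqrt a * sqrt n)) \<le> (n - a) / (n * sqrt n / 2)"
    by (rule divide_left_mono[OF d2 na]) (use pos d2 in auto)
  also have "\<dots> = 2 * (n - a) / (n * sqrt n)" by (simp add: field_simps)
  finally show ?thesis using e na sa by (simp add: divide_nonneg_pos)
qed

lemma comb_sum:
  fixes A S a n B D \<sigma> :: real
  assumes "\<sigma> > 0" "1 \<le> a" "a \<le> n" "n \<le> 2 * a" "\<bar>A\<bar> \<le> B * n" "\<bar>A - S\<bar> \<le> D"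
  shows "\<bar>A / (\<sigma> * sqrt a) - S / (\<sigma> * sqrt n)\<bar> \<le> (2 * B * (n - a) + D) / (\<sigma> * sqrt n)"
proof -
  note sl = sqrt_lemma[OF assms(2-4)]
  have sa: "sqrt a > 0" "sqrt n > 0" using assms by auto
  have e: "A / sqrt a - S / sqrt n = A * (1 / sqrt a - 1 / sqrt n) + (A - S) / sqrt n"
    by (simp add: algebra_simps diff_divide_distrib)
  have "\<bar>A * (1 / sqrt a - 1 / sqrt n)\<bar> = \<bar>A\<bar> * (1 / sqrt a - 1 / sqrt n)"
    using sl by (simp add: abs_mult)
  also have "\<dots> \<le> (B * n) * (2 * (n - a) / (n * sqrt n))"
    using sl assms(5) by (intro mult_mono) auto
  also have "\<dots> = 2 * B * (n - a) / sqrt n" using assms by (simp add: field_simps)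
  finally have t1: "\<bar>A * (1 / sqrt a - 1 / sqrt n)\<bar> \<le> 2 * B * (n - a) / sqrt n" .
  have t2: "\<bar>(A - S) / sqrt n\<bar> \<le> D / sqrt n"
    using assms(6) sa by (simp add: divide_right_mono)
  have "\<bar>A / sqrt a - S / sqrt n\<bar> \<le> \<bar>A * (1 / sqrt a - 1 / sqrt n)\<bar> + \<bar>(A - S) / sqrt n\<bar>"
    unfolding e by (rule abs_triangle_ineq)
  moreover have "(2 * B * (n - a) + D) / sqrt n = 2 * B * (n - a) / sqrt n + D / sqrt n"
    by (rule add_divide_distrib)
  ultimately have "\<bar>A / sqrt a - S / sqrt n\<bar> \<le> (2 * B * (n - a) + D) / sqrt n"
    using t1 t2 by linarith
  then have "\<bar>A / sqrt a - S / sqrt n\<bar> / \<sigma> \<le> (2 * B * (n - a) + D) / sqrt n / \<sigma>"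
    using assms(1) by (intro divide_right_mono) auto
  also have "(2 * B * (n - a) + D) / sqrt n / \<sigma> = (2 * B * (n - a) + D) / (\<sigma> * sqrt n)"
    by (simp add: mult.commute)
  moreover have "\<bar>A / sqrt a - S / sqrt n\<bar> / \<sigma> = \<bar>A / (\<sigma> * sqrt a) - S / (\<sigma> * sqrt n)\<bar>"
    using assms(1) sa by (simp add: field_simps)
  ultimately show ?thesis by (metis mult.commute)
qed


lemma sq_approx:
  fixes a b D c M n :: real
  assumes "0 \<le> D" "1 \<le> c" "1 \<le> n" "0 < M" "n \<le> 2 * c * M" "\<bar>n - c * M\<bar> \<le> c" "\<bar>a - b\<bar> \<le> D"
  shows "\<bar>a\<^sup>2 / M - c * b\<^sup>2 / n\<bar> \<le> (4 * c * D + 2 * c * D\<^sup>2 + 2 * c\<^sup>2) * (1 + b\<^sup>2 / n) / sqrt n"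
proof -
  have sn0: "sqrt n > 0" "1 \<le> sqrt n" "sqrt n * sqrt n = n" using assms(3) by auto
  have "sqrt n * 1 \<le> sqrt n * sqrt n" using sn0 by (intro mult_left_mono) auto
  then have sn1: "sqrt n \<le> n" using sn0 by simp
  note sn = sn0 sn1
  have iM: "1 / M \<le> 2 * c / n"
  proof -
    have "1 / M = (2 * c) / (2 * c * M)" using assms(2,4) by simp
    also have "\<dots> \<le> 2 * c / n" using assms by (intro divide_left_mono) auto
    finally show ?thesis .
  qed
  have Q: "0 \<le> b\<^sup>2 / n" using assms by simp
  have ab: "\<bar>a\<^sup>2 - b\<^sup>2\<bar> \<le> D * (2 * \<bar>b\<bar> + D)"
  proof -
    have "a\<^sup>2 - b\<^sup>2 = (a - b) * (a + b)" by (simp add: power2_eq_square algebra_simps)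
    then have "\<bar>a\<^sup>2 - b\<^sup>2\<bar> = \<bar>a - b\<bar> * \<bar>a + b\<bar>" by (simp add: abs_mult)
    also have "\<bar>a + b\<bar> \<le> 2 * \<bar>b\<bar> + D" using assms(7) by linarith
    then have "\<bar>a - b\<bar> * \<bar>a + b\<bar> \<le> D * (2 * \<bar>b\<bar> + D)" using assms(7) by (intro mult_mono) auto
    finally show ?thesis .
  qed
  have y: "\<bar>b\<bar> / sqrt n \<le> 1 + b\<^sup>2 / n"
  proof -
    have "(\<bar>b\<bar> / sqrt n)\<^sup>2 = b\<^sup>2 / n" using sn by (simp add: power_divide)
    moreover have "z \<le> 1 + z\<^sup>2" for z :: real
    proof -
      have "0 \<le> (z - 1/2)\<^sup>2" by simp
      then show ?thesis by (simp add: power2_eq_square algebra_simps)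
    qed
    ultimately show ?thesis by metis
  qed
  have bn: "\<bar>b\<bar> / n \<le> (1 + b\<^sup>2 / n) / sqrt n"
  proof -
    have e: "\<bar>b\<bar> / n = (\<bar>b\<bar> / sqrt n) / sqrt n" using sn by (metis divide_divide_eq_left)
    show ?thesis unfolding e using y sn(1) by (intro divide_right_mono) auto
  qed
  have i1: "1 / n \<le> 1 / sqrt n" using sn by (intro divide_left_mono) auto
  have dn: "1 / n \<le> (1 + b\<^sup>2 / n) / sqrt n"
  proof -
    have "1 / sqrt n \<le> (1 + b\<^sup>2 / n) / sqrt n" using Q sn by (intro divide_right_mono) auto
    then show ?thesis using i1 by linarith
  qed
  have t1: "\<bar>(a\<^sup>2 - b\<^sup>2) / M\<bar> \<le> (4 * c * D + 2 * c * D\<^sup>2) * (1 + b\<^sup>2 / n) / sqrt n"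
  proof -
    have "\<bar>(a\<^sup>2 - b\<^sup>2) / M\<bar> = \<bar>a\<^sup>2 - b\<^sup>2\<bar> * (1 / M)" using assms(4) by simp
    also have "\<dots> \<le> D * (2 * \<bar>b\<bar> + D) * (2 * c / n)"
      using ab iM assms by (intro mult_mono) auto
    also have "\<dots> = 4 * c * D * (\<bar>b\<bar> / n) + 2 * c * D\<^sup>2 * (1 / n)"
      by (simp add: algebra_simps power2_eq_square)
    also have "\<dots> \<le> 4 * c * D * ((1 + b\<^sup>2 / n) / sqrt n) + 2 * c * D\<^sup>2 * ((1 + b\<^sup>2 / n) / sqrt n)"
      using bn dn assms by (intro add_mono mult_left_mono) auto
    also have "\<dots> = (4 * c * D + 2 * c * D\<^sup>2) * ((1 + b\<^sup>2 / n) / sqrt n)"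
      by (simp only: distrib_right)
    also have "\<dots> = (4 * c * D + 2 * c * D\<^sup>2) * (1 + b\<^sup>2 / n) / sqrt n"
      by (simp only: times_divide_eq_right)
    finally show ?thesis .
  qed
  have t2: "\<bar>b\<^sup>2 / M - c * b\<^sup>2 / n\<bar> \<le> 2 * c\<^sup>2 * (1 + b\<^sup>2 / n) / sqrt n"
  proof -
    have nz: "n \<noteq> 0" "M \<noteq> 0" using assms(3,4) by auto
    have "b\<^sup>2 / M - c * b\<^sup>2 / n = (b\<^sup>2 / n) * ((n - c * M) * (1 / M))"
      using nz by (simp add: field_simps)
    then have "\<bar>b\<^sup>2 / M - c * b\<^sup>2 / n\<bar> = (b\<^sup>2 / n) * (\<bar>n - c * M\<bar> * (1 / M))"
      using Q assms(3,4) by (simp add: abs_mult)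
    also have "\<dots> \<le> (b\<^sup>2 / n) * (c * (2 * c / n))"
      using Q assms iM by (intro mult_left_mono mult_mono) auto
    also have "\<dots> = 2 * c\<^sup>2 * (b\<^sup>2 / n) * (1 / n)" by (simp add: algebra_simps power2_eq_square)
    also have "\<dots> \<le> 2 * c\<^sup>2 * (1 + b\<^sup>2 / n) * (1 / sqrt n)"
      using Q i1 sn by (intro mult_mono) auto
    finally show ?thesis by simp
  qed
  have "a\<^sup>2 / M - c * b\<^sup>2 / n = (a\<^sup>2 - b\<^sup>2) / M + (b\<^sup>2 / M - c * b\<^sup>2 / n)"
    by (simp add: diff_divide_distrib)
  then have "\<bar>a\<^sup>2 / M - c * b\<^sup>2 / n\<bar> \<le> \<bar>(a\<^sup>2 - b\<^sup>2) / M\<bar> + \<bar>b\<^sup>2 / M - c * b\<^sup>2 / n\<bar>"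
    by (metis abs_triangle_ineq)
  also have "\<dots> \<le> (4 * c * D + 2 * c * D\<^sup>2) * (1 + b\<^sup>2 / n) / sqrt n + 2 * c\<^sup>2 * (1 + b\<^sup>2 / n) / sqrt n"
    using t1 t2 by simp
  also have "\<dots> = (4 * c * D + 2 * c * D\<^sup>2 + 2 * c\<^sup>2) * (1 + b\<^sup>2 / n) / sqrt n"
    by (simp only: add_divide_distrib[symmetric] distrib_right)
  finally show ?thesis .
qed



locale Tctx =
  fixes X :: "'a::euclidean_space set"
    and P0 :: "'a measure"
    and msum mlb Nlb Lsb K :: nat
    and fsm flb fsb :: "(nat \<Rightarrow> 'a) \<Rightarrow> real"
    and \<alpha> :: "nat \<Rightarrow> real set"
    and N s h :: nat
    and Q :: "nat \<Rightarrow> 'w measure"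
    and eps :: "nat \<Rightarrow> 'w \<Rightarrow> nat \<Rightarrow> 'a"
  assumes P0: "prob_space P0" "sets P0 = sets (restrict_space borel X)"
    and pos: "msum \<ge> 1" "mlb \<ge> 1" "Nlb \<ge> 1" "Lsb \<ge> 1" "K \<ge> 1"
    and fsm_meas: "fsm \<in> borel_measurable (PiM {..<msum} (\<lambda>_. restrict_space borel X))"
    and fsm_bdd: "\<exists>B. \<forall>\<theta> \<in> space (PiM {..<msum} (\<lambda>_. restrict_space borel X)). \<bar>fsm \<theta>\<bar> \<le> B"
    and flb_meas: "flb \<in> borel_measurable (PiM {..<mlb} (\<lambda>_. restrict_space borel X))"
    and flb_bdd: "\<exists>B. \<forall>\<theta> \<in> space (PiM {..<mlb} (\<lambda>_. restrict_space borel X)). \<bar>flb \<theta>\<bar> \<le> B"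
    and fsb_meas: "fsb \<in> borel_measurable (PiM {..<Lsb} (\<lambda>_. restrict_space borel X))"
    and \<alpha>_meas: "\<And>j. j \<le> K \<Longrightarrow> \<alpha> j \<in> sets borel"
    and sig_sum: "sig2H0 P0 msum fsm > 0"
    and sig_lb: "sig2H0 P0 mlb flb > 0"
    and Esb_pos: "\<And>j. j \<le> K \<Longrightarrow> Esb P0 Lsb fsb \<alpha> j > 0"
    and Nsh: "N \<ge> 1" "s \<ge> 1" "h \<ge> 1" "s \<ge> h + max msum mlb - 1" "Nlb dvd N" "Lsb dvd h"
    and Q: "\<And>n. prob_space (Q n)"
    and eps_meas: "\<And>n i. i \<in> {1..n} \<Longrightarrow> (\<lambda>\<omega>. eps n \<omega> i) \<in> measurable (Q n) (restrict_space borel X)"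
begin

definition PX :: "nat \<Rightarrow> (nat \<Rightarrow> 'a) measure" where
  "PX m = PiM {..<m} (\<lambda>_. restrict_space borel X)"

definition PP :: "nat \<Rightarrow> (nat \<Rightarrow> 'a) measure" where
  "PP m = PiM {..<m} (\<lambda>_. P0)"

lemma spaceP0: "space P0 = X"
  using sets_eq_imp_space_eq[OF P0(2)] by (simp add: space_restrict_space)

lemma H0_prob: "prob_space (H0 P0)"
proof -
  interpret product_prob_space "\<lambda>_::nat. P0" UNIV
    by (rule product_prob_spaceI) (rule P0(1))
  show ?thesis unfolding H0_def by (rule P.prob_space_axioms)
qed

lemma PP_prob: "prob_space (PP m)"
  unfolding PP_def by (rule prob_space_PiM) (use P0(1) in auto)

lemma sets_PP: "sets (PP m) = sets (PX m)"
  unfolding PP_def PX_def by (rule sets_PiM_cong) (auto simp: P0(2))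

lemma space_PX: "space (PX m) = PiE {..<m} (\<lambda>_. X)"
  unfolding PX_def by (simp add: space_PiM space_restrict_space)

lemma space_H0: "space (H0 P0) = PiE UNIV (\<lambda>_. X)"
  unfolding H0_def by (simp add: space_PiM spaceP0)

lemma win_space: "(\<And>j. j < m \<Longrightarrow> x (a + j) \<in> X) \<Longrightarrow> win x a m \<in> space (PX m)"
  unfolding space_PX win_def by auto

lemma win_space_H0: "\<omega> \<in> space (H0 P0) \<Longrightarrow> win \<omega> a m \<in> space (PX m)"
  by (rule win_space) (auto simp: space_H0)

lemma win_win: "c + m \<le> s' \<Longrightarrow> win (win x a s') c m = win x (a + c) m"
  unfolding win_def by (auto simp: fun_eq_iff add.assoc)

lemma win_meas: "(\<lambda>\<omega>. win \<omega> a m) \<in> measurable (H0 P0) (PP m)"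
  unfolding win_def H0_def PP_def
  by (rule measurable_restrict) (rule measurable_component_singleton, simp)

lemma distr_win: "distr (H0 P0) (PP m) (\<lambda>\<omega>. win \<omega> a m) = PP m"
proof -
  have "distr (PiM UNIV (\<lambda>_. P0)) (\<Pi>\<^sub>M i\<in>{..<m}. (\<lambda>_. P0) ((+) a i)) (\<lambda>\<omega>. \<lambda>n\<in>{..<m}. \<omega> ((+) a n))
        = (\<Pi>\<^sub>M i\<in>{..<m}. (\<lambda>_. P0) ((+) a i))"
    by (rule distr_PiM_reindex) (use P0(1) in auto)
  then show ?thesis unfolding H0_def PP_def win_def by simp
qed

lemma meas_PP: "f \<in> borel_measurable (PX m) \<Longrightarrow> f \<in> borel_measurable (PP m)"
  using measurable_cong_sets[OF sets_PP refl] by blast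

lemma int_win:
  fixes f :: "(nat \<Rightarrow> 'a) \<Rightarrow> real"
  assumes "f \<in> borel_measurable (PX m)"
  shows "(\<integral>\<omega>. f (win \<omega> a m) \<partial>H0 P0) = (\<integral>\<theta>. f \<theta> \<partial>PP m)"
proof -
  have "(\<integral>\<theta>. f \<theta> \<partial>PP m) = (\<integral>\<theta>. f \<theta> \<partial>distr (H0 P0) (PP m) (\<lambda>\<omega>. win \<omega> a m))"
    by (simp add: distr_win)
  also have "\<dots> = (\<integral>\<omega>. f (win \<omega> a m) \<partial>H0 P0)"
    by (rule integral_distr[OF win_meas meas_PP[OF assms]])
  finally show ?thesis by simp
qed

lemma EH0_win:
  fixes f :: "(nat \<Rightarrow> 'a) \<Rightarrow> real"
  assumes "f \<in> borel_measurable (PX m)"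
  shows "(\<integral>\<omega>. f (win \<omega> a m) \<partial>H0 P0) = EH0 P0 m f"
  unfolding EH0_def using int_win[OF assms, of a] int_win[OF assms, of 1] by simp

lemma int_bound:
  fixes f :: "'b \<Rightarrow> real"
  assumes "prob_space M" "\<And>x. x \<in> space M \<Longrightarrow> \<bar>f x\<bar> \<le> B"
  shows "\<bar>integral\<^sup>L M f\<bar> \<le> B"
proof -
  interpret prob_space M by fact
  have B: "0 \<le> B" using assms(2) by (metis abs_ge_zero order_trans some_in_eq not_empty)
  have "integral\<^sup>L M f \<le> (\<integral>x. B \<partial>M)"
    by (rule integral_mono') (use assms(2) B in \<open>auto simp: abs_le_iff\<close>)
  moreover have "integral\<^sup>L M (\<lambda>x. - f x) \<le> (\<integral>x. B \<partial>M)"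
    by (rule integral_mono') (use assms(2) B in \<open>auto simp: abs_le_iff\<close>)
  ultimately show ?thesis by (simp add: prob_space)
qed


definition "Es = EH0 P0 msum fsm"
definition "El = EH0 P0 mlb flb"
definition "\<sigma>s = sigH0 P0 msum fsm"
definition "\<sigma>l = sigH0 P0 mlb flb"
definition "Eb j = Esb P0 Lsb fsb \<alpha> j"
definition "hb = h div Lsb"
definition "Bs = (SOME B. \<forall>\<theta> \<in> space (PX msum). \<bar>fsm \<theta>\<bar> \<le> B)"
definition "Bl = (SOME B. \<forall>\<theta> \<in> space (PX mlb). \<bar>flb \<theta>\<bar> \<le> B)"

lemma Bs: "\<theta> \<in> space (PX msum) \<Longrightarrow> \<bar>fsm \<theta>\<bar> \<le> Bs"
  using someI_ex[OF fsm_bdd[folded PX_def]] unfolding Bs_def by blast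

lemma Bl: "\<theta> \<in> space (PX mlb) \<Longrightarrow> \<bar>flb \<theta>\<bar> \<le> Bl"
  using someI_ex[OF flb_bdd[folded PX_def]] unfolding Bl_def by blast

lemma h_le_s: "h \<le> s"
  using Nsh(4) pos(1) by (simp add: max_def split: if_splits)

lemma h_hb: "h = Lsb * hb"
  unfolding hb_def using Nsh(6) by simp

lemma hb_pos: "hb \<ge> 1"
  using h_hb Nsh(3) by (cases hb) auto

lemma space_PP: "space (PP m) = space (PX m)"
  using sets_eq_imp_space_eq[OF sets_PP] .

lemma Es_bound: "\<bar>Es\<bar> \<le> Bs"
  unfolding Es_def EH0_def using EH0_win[OF fsm_meas[folded PX_def], of 1]
  by (metis Bs H0_prob int_bound win_space_H0)

lemma El_bound: "\<bar>El\<bar> \<le> Bl"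
  unfolding El_def EH0_def
  by (metis Bl H0_prob int_bound win_space_H0)

lemma \<sigma>s_pos: "\<sigma>s > 0" unfolding \<sigma>s_def sigH0_def using sig_sum by simp
lemma \<sigma>l_pos: "\<sigma>l > 0" unfolding \<sigma>l_def sigH0_def using sig_lb by simp

lemma fvec_K2:
  "fvec P0 msum fsm mlb flb Lsb K fsb \<alpha> h (K+2) (win x a s) = (\<Sum>u=1..h. fsm (win x (a + u - 1) msum)) / \<sigma>s"
proof -
  have "(\<Sum>u=1..h. fsm (win (win x a s) (u - 1) msum)) = (\<Sum>u=1..h. fsm (win x (a + u - 1) msum))"
  proof (rule sum.cong[OF refl])
    fix u assume u: "u \<in> {1..h}"
    then have "u - 1 + msum \<le> s" using Nsh(4) by auto
    then show "fsm (win (win x a s) (u - 1) msum) = fsm (win x (a + u - 1) msum)"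
      using u by (simp add: win_win)
  qed
  then show ?thesis unfolding fvec_def \<sigma>s_def by simp
qed

lemma fvec_K1:
  "fvec P0 msum fsm mlb flb Lsb K fsb \<alpha> h (K+1) (win x a s) = (\<Sum>u=1..h. flb (win x (a + u - 1) mlb)) / \<sigma>l"
proof -
  have "(\<Sum>u=1..h. flb (win (win x a s) (u - 1) mlb)) = (\<Sum>u=1..h. flb (win x (a + u - 1) mlb))"
  proof (rule sum.cong[OF refl])
    fix u assume u: "u \<in> {1..h}"
    then have "u - 1 + mlb \<le> s" using Nsh(4) by auto
    then show "flb (win (win x a s) (u - 1) mlb) = flb (win x (a + u - 1) mlb)"
      using u by (simp add: win_win)
  qed
  then show ?thesis unfolding fvec_def \<sigma>l_def by simp
qed

lemma fvec_j:
  assumes "j \<le> K"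
  shows "fvec P0 msum fsm mlb flb Lsb K fsb \<alpha> h j (win x a s)
     = (\<Sum>u=1..hb. if fsb (win x (a + Lsb * (u - 1)) Lsb) \<in> \<alpha> j then 1 else 0) / sqrt (Eb j)"
proof -
  have "(\<Sum>u=1..hb. if fsb (win (win x a s) (Lsb * (u - 1)) Lsb) \<in> \<alpha> j then 1 else (0::real))
      = (\<Sum>u=1..hb. if fsb (win x (a + Lsb * (u - 1)) Lsb) \<in> \<alpha> j then 1 else 0)"
  proof (rule sum.cong[OF refl])
    fix u assume u: "u \<in> {1..hb}"
    then have "Lsb * (u - 1) + Lsb = Lsb * u" by (cases u) auto
    also have "\<dots> \<le> Lsb * hb" using u by simp
    also have "\<dots> \<le> s" using h_hb h_le_s by simp
    finally show "(if fsb (win (win x a s) (Lsb * (u - 1)) Lsb) \<in> \<alpha> j then 1 else (0::real))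
      = (if fsb (win x (a + Lsb * (u - 1)) Lsb) \<in> \<alpha> j then 1 else 0)"
      by (simp add: win_win)
  qed
  then show ?thesis unfolding fvec_def Eb_def hb_def using assms by simp
qed

lemma integrable_win:
  fixes f :: "(nat \<Rightarrow> 'a) \<Rightarrow> real"
  assumes "f \<in> borel_measurable (PX m)" "\<And>\<theta>. \<theta> \<in> space (PX m) \<Longrightarrow> \<bar>f \<theta>\<bar> \<le> B"
  shows "integrable (H0 P0) (\<lambda>\<omega>. f (win \<omega> a m))"
proof -
  interpret prob_space "H0 P0" by (rule H0_prob)
  show ?thesis
  proof (rule integrable_const_bound[where B=B])
    show "AE x in H0 P0. norm (f (win x a m)) \<le> B"
      using assms(2) win_space_H0 by auto
    show "(\<lambda>\<omega>. f (win \<omega> a m)) \<in> borel_measurable (H0 P0)"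
      using measurable_compose[OF win_meas meas_PP[OF assms(1)]] .
  qed
qed

lemma cK2: "(\<integral>\<omega>. fvec P0 msum fsm mlb flb Lsb K fsb \<alpha> h (K+2) (win \<omega> 1 s) \<partial>H0 P0) = real h * Es / \<sigma>s"
proof -
  have "(\<integral>\<omega>. fvec P0 msum fsm mlb flb Lsb K fsb \<alpha> h (K+2) (win \<omega> 1 s) \<partial>H0 P0)
      = (\<integral>\<omega>. (\<Sum>u=1..h. fsm (win \<omega> u msum)) \<partial>H0 P0) / \<sigma>s"
    unfolding fvec_K2 by simp
  also have "(\<integral>\<omega>. (\<Sum>u=1..h. fsm (win \<omega> u msum)) \<partial>H0 P0) = (\<Sum>u=1..h. \<integral>\<omega>. fsm (win \<omega> u msum) \<partial>H0 P0)"
    by (rule Bochner_Integration.integral_sum) (rule integrable_win[OF fsm_meas[folded PX_def] Bs])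
  also have "\<dots> = (\<Sum>u=1..h. Es)"
    using EH0_win[OF fsm_meas[folded PX_def]] unfolding Es_def by simp
  finally show ?thesis by simp
qed

lemma cK1: "(\<integral>\<omega>. fvec P0 msum fsm mlb flb Lsb K fsb \<alpha> h (K+1) (win \<omega> 1 s) \<partial>H0 P0) = real h * El / \<sigma>l"
proof -
  have "(\<integral>\<omega>. fvec P0 msum fsm mlb flb Lsb K fsb \<alpha> h (K+1) (win \<omega> 1 s) \<partial>H0 P0)
      = (\<integral>\<omega>. (\<Sum>u=1..h. flb (win \<omega> u mlb)) \<partial>H0 P0) / \<sigma>l"
    unfolding fvec_K1 by simp
  also have "(\<integral>\<omega>. (\<Sum>u=1..h. flb (win \<omega> u mlb)) \<partial>H0 P0) = (\<Sum>u=1..h. \<integral>\<omega>. flb (win \<omega> u mlb) \<partial>H0 P0)"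
    by (rule Bochner_Integration.integral_sum) (rule integrable_win[OF flb_meas[folded PX_def] Bl])
  also have "\<dots> = (\<Sum>u=1..h. El)"
    using EH0_win[OF flb_meas[folded PX_def]] unfolding El_def by simp
  finally show ?thesis by simp
qed

lemma ind_meas: "j \<le> K \<Longrightarrow> (\<lambda>\<theta>. indicator (\<alpha> j) (fsb \<theta>) :: real) \<in> borel_measurable (PX Lsb)"
  unfolding PX_def
  by (rule measurable_compose[OF fsb_meas borel_measurable_indicator[OF \<alpha>_meas]])

lemma ind_int:
  assumes "j \<le> K"
  shows "(\<integral>\<omega>. (if fsb (win \<omega> a Lsb) \<in> \<alpha> j then 1 else 0) \<partial>H0 P0) = Eb j"
proof -
  have e: "(\<lambda>\<omega>. (if fsb (win \<omega> b Lsb) \<in> \<alpha> j then 1 else 0::real)) = (\<lambda>\<omega>. indicator (\<alpha> j) (fsb (win \<omega> b Lsb)))" for b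
    by (auto simp: indicator_def)
  have "Eb j = (\<integral>\<omega>. indicator {\<omega> \<in> space (H0 P0). fsb (win \<omega> 1 Lsb) \<in> \<alpha> j} \<omega> \<partial>H0 P0)"
    unfolding Eb_def Esb_def by (simp add: Int_absorb2)
  also have "\<dots> = (\<integral>\<omega>. indicator (\<alpha> j) (fsb (win \<omega> 1 Lsb)) \<partial>H0 P0)"
    by (rule Bochner_Integration.integral_cong) (auto simp: indicator_def)
  also have "\<dots> = (\<integral>\<omega>. indicator (\<alpha> j) (fsb (win \<omega> a Lsb)) \<partial>H0 P0)"
    using int_win[OF ind_meas[OF assms], of 1] int_win[OF ind_meas[OF assms], of a] by simp
  finally show ?thesis using e by simp
qed

lemma ind_integrable:
  assumes "j \<le> K"
  shows "integrable (H0 P0) (\<lambda>\<omega>. if fsb (win \<omega> a Lsb) \<in> \<alpha> j then 1 else 0::real)"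
proof -
  have "integrable (H0 P0) (\<lambda>\<omega>. indicator (\<alpha> j) (fsb (win \<omega> a Lsb)) :: real)"
    by (rule integrable_win[OF ind_meas[OF assms], of 1]) (simp add: indicator_def)
  moreover have "(\<lambda>\<omega>. indicator (\<alpha> j) (fsb (win \<omega> a Lsb)) :: real)
     = (\<lambda>\<omega>. if fsb (win \<omega> a Lsb) \<in> \<alpha> j then 1 else 0::real)"
    by (auto simp: indicator_def)
  ultimately show ?thesis by simp
qed

lemma cj:
  assumes "j \<le> K"
  shows "(\<integral>\<omega>. fvec P0 msum fsm mlb flb Lsb K fsb \<alpha> h j (win \<omega> 1 s) \<partial>H0 P0) = real hb * Eb j / sqrt (Eb j)"
proof -
  have "(\<integral>\<omega>. fvec P0 msum fsm mlb flb Lsb K fsb \<alpha> h j (win \<omega> 1 s) \<partial>H0 P0)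
      = (\<integral>\<omega>. (\<Sum>u=1..hb. if fsb (win \<omega> (1 + Lsb * (u - 1)) Lsb) \<in> \<alpha> j then 1 else (0::real)) \<partial>H0 P0) / sqrt (Eb j)"
    unfolding fvec_j[OF assms] by simp
  also have "(\<integral>\<omega>. (\<Sum>u=1..hb. if fsb (win \<omega> (1 + Lsb * (u - 1)) Lsb) \<in> \<alpha> j then 1 else (0::real)) \<partial>H0 P0)
     = (\<Sum>u=1..hb. \<integral>\<omega>. (if fsb (win \<omega> (1 + Lsb * (u - 1)) Lsb) \<in> \<alpha> j then 1 else (0::real)) \<partial>H0 P0)"
    apply (rule Bochner_Integration.integral_sum)
    using ind_integrable[OF assms] apply simp
    done
  also have "\<dots> = (\<Sum>u=1..hb. Eb j)"
    using ind_int[OF assms] by simp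
  finally show ?thesis by simp
qed

end



context Tctx begin

definition "Gs x t = fsm (win x t msum) - Es"
definition "Gl x t = flb (win x t mlb) - El"
definition "Gb x j t = (if fsb (win x (Lsb * (t - 1) + 1) Lsb) \<in> \<alpha> j then 1 else 0) - Eb j"

lemma Xset: "{i::nat. L * (k - 1) \<le> h * i \<and> h * i + s \<le> L * k} = Iset L h s k"
  unfolding Iset_def by simp

lemma Xcal_K2:
  "Xcal P0 msum fsm mlb flb Lsb K fsb \<alpha> N s h n x k (K+2)
     = (\<Sum>t\<in>Aset (n div N) h s h k. Gs x t) / (\<sigma>s * sqrt (real n))"
proof -
  have e: "fvec P0 msum fsm mlb flb Lsb K fsb \<alpha> h (K+2) (win x (h * i + 1) s) - real h * Es / \<sigma>s
      = (\<Sum>u=1..h. Gs x (h * i + u)) / \<sigma>s" for i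
  proof -
    have "(\<Sum>u=1..h. fsm (win x (h * i + 1 + u - 1) msum)) = (\<Sum>u=1..h. fsm (win x (h * i + u) msum))"
      by simp
    moreover have "(\<Sum>u=1..h. Gs x (h * i + u)) = (\<Sum>u=1..h. fsm (win x (h * i + u) msum)) - real h * Es"
      unfolding Gs_def by (simp add: sum_subtractf)
    ultimately show ?thesis unfolding fvec_K2 by (simp add: diff_divide_distrib)
  qed
  have "Xcal P0 msum fsm mlb flb Lsb K fsb \<alpha> N s h n x k (K+2)
      = (1 / sqrt (real n)) * (\<Sum>i\<in>Iset (n div N) h s k. (\<Sum>u=1..h. Gs x (h * i + u)) / \<sigma>s)"
    unfolding Xcal_def Let_def cK2 Xset e by simp
  also have "\<dots> = (1 / sqrt (real n)) * ((\<Sum>i\<in>Iset (n div N) h s k. \<Sum>u=1..h. Gs x (h * i + u)) / \<sigma>s)"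
    by (simp add: sum_divide_distrib)
  also have "\<dots> = (1 / sqrt (real n)) * ((\<Sum>t\<in>Aset (n div N) h s h k. Gs x t) / \<sigma>s)"
    using sum_Aset[OF Nsh(3) Nsh(3), of "Gs x" "n div N" s k] by simp
  finally show ?thesis by simp
qed

lemma Xcal_K1:
  "Xcal P0 msum fsm mlb flb Lsb K fsb \<alpha> N s h n x k (K+1)
     = (\<Sum>t\<in>Aset (n div N) h s h k. Gl x t) / (\<sigma>l * sqrt (real n))"
proof -
  have e: "fvec P0 msum fsm mlb flb Lsb K fsb \<alpha> h (K+1) (win x (h * i + 1) s) - real h * El / \<sigma>l
      = (\<Sum>u=1..h. Gl x (h * i + u)) / \<sigma>l" for i
  proof -
    have "(\<Sum>u=1..h. flb (win x (h * i + 1 + u - 1) mlb)) = (\<Sum>u=1..h. flb (win x (h * i + u) mlb))"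
      by simp
    moreover have "(\<Sum>u=1..h. Gl x (h * i + u)) = (\<Sum>u=1..h. flb (win x (h * i + u) mlb)) - real h * El"
      unfolding Gl_def by (simp add: sum_subtractf)
    ultimately show ?thesis unfolding fvec_K1 by (simp add: diff_divide_distrib)
  qed
  have "Xcal P0 msum fsm mlb flb Lsb K fsb \<alpha> N s h n x k (K+1)
      = (1 / sqrt (real n)) * (\<Sum>i\<in>Iset (n div N) h s k. (\<Sum>u=1..h. Gl x (h * i + u)) / \<sigma>l)"
    unfolding Xcal_def Let_def cK1 Xset e by simp
  also have "\<dots> = (1 / sqrt (real n)) * ((\<Sum>i\<in>Iset (n div N) h s k. \<Sum>u=1..h. Gl x (h * i + u)) / \<sigma>l)"
    by (simp add: sum_divide_distrib)
  also have "\<dots> = (1 / sqrt (real n)) * ((\<Sum>t\<in>Aset (n div N) h s h k. Gl x t) / \<sigma>l)"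
    using sum_Aset[OF Nsh(3) Nsh(3), of "Gl x" "n div N" s k] by simp
  finally show ?thesis by simp
qed

lemma Xcal_j:
  assumes j: "j \<le> K"
  shows "Xcal P0 msum fsm mlb flb Lsb K fsb \<alpha> N s h n x k j
     = (\<Sum>t\<in>Aset (n div N) h s hb k. Gb x j t) / (sqrt (Eb j) * sqrt (real n))"
proof -
  have e: "fvec P0 msum fsm mlb flb Lsb K fsb \<alpha> h j (win x (h * i + 1) s) - real hb * Eb j / sqrt (Eb j)
      = (\<Sum>u=1..hb. Gb x j (hb * i + u)) / sqrt (Eb j)" for i
  proof -
    have "(\<Sum>u=1..hb. if fsb (win x (h * i + 1 + Lsb * (u - 1)) Lsb) \<in> \<alpha> j then 1 else (0::real))
        = (\<Sum>u=1..hb. if fsb (win x (Lsb * (hb * i + u - 1) + 1) Lsb) \<in> \<alpha> j then 1 else 0)"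
    proof (rule sum.cong[OF refl])
      fix u assume u: "u \<in> {1..hb}"
      have "h * i + 1 + Lsb * (u - 1) = Lsb * (hb * i + u - 1) + 1"
        using u h_hb by (cases u) (auto simp: algebra_simps)
      then show "(if fsb (win x (h * i + 1 + Lsb * (u - 1)) Lsb) \<in> \<alpha> j then 1 else (0::real))
        = (if fsb (win x (Lsb * (hb * i + u - 1) + 1) Lsb) \<in> \<alpha> j then 1 else 0)" by simp
    qed
    moreover have "(\<Sum>u=1..hb. Gb x j (hb * i + u))
       = (\<Sum>u=1..hb. if fsb (win x (Lsb * (hb * i + u - 1) + 1) Lsb) \<in> \<alpha> j then 1 else (0::real)) - real hb * Eb j"
      unfolding Gb_def by (simp add: sum_subtractf)
    ultimately show ?thesis unfolding fvec_j[OF j] by (simp add: diff_divide_distrib)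
  qed
  have "Xcal P0 msum fsm mlb flb Lsb K fsb \<alpha> N s h n x k j
      = (1 / sqrt (real n)) * (\<Sum>i\<in>Iset (n div N) h s k. (\<Sum>u=1..hb. Gb x j (hb * i + u)) / sqrt (Eb j))"
    unfolding Xcal_def Let_def cj[OF j] Xset e by simp
  also have "\<dots> = (1 / sqrt (real n)) * ((\<Sum>i\<in>Iset (n div N) h s k. \<Sum>u=1..hb. Gb x j (hb * i + u)) / sqrt (Eb j))"
    by (simp add: sum_divide_distrib)
  also have "\<dots> = (1 / sqrt (real n)) * ((\<Sum>t\<in>Aset (n div N) h s hb k. Gb x j t) / sqrt (Eb j))"
    using sum_Aset[OF hb_pos Nsh(3), of "Gb x j" "n div N" s k] by simp
  finally show ?thesis by simp
qed

end



lemma blk_shift: fixes f :: "nat \<Rightarrow> real" shows "(\<Sum>i=1..q. f (q * (k - 1) + i)) = (\<Sum>t\<in>{q * (k - 1) + 1..q * (k - 1) + q}. (f t :: real))"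
  using sum.shift_bounds_cl_nat_ivl[of f 1 "q * (k - 1)" q] by (simp add: add.commute)

lemma sum_blocks: fixes f :: "nat \<Rightarrow> real" and m :: nat shows "(\<Sum>k=1..m. \<Sum>i=1..q. f (q * (k - 1) + i)) = (\<Sum>t=1..q * m. (f t :: real))"
proof (induction m)
  case 0 then show ?case by simp
next
  case (Suc m)
  have "(\<Sum>t=1..q * Suc m. f t) = (\<Sum>t=1..q * m + q. f t)" by (simp add: algebra_simps)
  also have "\<dots> = (\<Sum>t=1..q * m. f t) + (\<Sum>t=q * m + 1..q * m + q. f t)"
    by (rule sum.ub_add_nat) simp
  also have "(\<Sum>t=q * m + 1..q * m + q. f t) = (\<Sum>i=1..q. f (q * m + i))"
    using blk_shift[of f q "Suc m"] by simp
  finally show ?case using Suc by simp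
qed

context Tctx begin

definition "q = N div Nlb"
definition "n0 = N * (s + h + 2) + 2 * msum"

lemma Nq: "N = q * Nlb" unfolding q_def using Nsh(5) by simp
lemma q_pos: "q \<ge> 1" using Nq Nsh(1) by (cases q) auto

lemma sumY: "(\<Sum>k=1..Nlb. Ycal P0 msum fsm mlb flb Nlb Lsb K fsb \<alpha> N s h n x k j)
   = (\<Sum>k=1..N. Xcal P0 msum fsm mlb flb Lsb K fsb \<alpha> N s h n x k j)"
proof -
  have "(\<Sum>k=1..Nlb. Ycal P0 msum fsm mlb flb Nlb Lsb K fsb \<alpha> N s h n x k j)
     = (\<Sum>k=1..Nlb. \<Sum>i=1..q. Xcal P0 msum fsm mlb flb Lsb K fsb \<alpha> N s h n x (q * (k - 1) + i) j)"
    unfolding Ycal_def q_def by (rule refl)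
  also have "\<dots> = (\<Sum>t=1..q * Nlb. Xcal P0 msum fsm mlb flb Lsb K fsb \<alpha> N s h n x t j)"
    by (rule sum_blocks)
  finally show ?thesis using Nq by simp
qed

lemma Ycal_blk: "k \<ge> 1 \<Longrightarrow> Ycal P0 msum fsm mlb flb Nlb Lsb K fsb \<alpha> N s h n x k j
   = (\<Sum>k'\<in>{q * (k - 1) + 1..q * k}. Xcal P0 msum fsm mlb flb Lsb K fsb \<alpha> N s h n x k' j)"
proof -
  assume k: "k \<ge> 1"
  have "q * k = q * (k - 1) + q" using k by (cases k) (auto simp: algebra_simps)
  have "Ycal P0 msum fsm mlb flb Nlb Lsb K fsb \<alpha> N s h n x k j
     = (\<Sum>i=1..q. Xcal P0 msum fsm mlb flb Lsb K fsb \<alpha> N s h n x (q * (k - 1) + i) j)"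
    unfolding Ycal_def q_def by (rule refl)
  also have "\<dots> = (\<Sum>k'\<in>{q * (k - 1) + 1..q * (k - 1) + q}. Xcal P0 msum fsm mlb flb Lsb K fsb \<alpha> N s h n x k' j)"
    by (rule blk_shift)
  finally show ?thesis using \<open>q * k = q * (k - 1) + q\<close> by simp
qed

lemma Bs_nn: "Bs \<ge> 0" using Es_bound by linarith
lemma Bl_nn: "Bl \<ge> 0" using El_bound by linarith

lemma Gs_bound:
  assumes "\<forall>i\<in>{1..n}. x i \<in> X" "t \<ge> 1" "t + msum \<le> n + 1"
  shows "\<bar>Gs x t\<bar> \<le> 2 * Bs"
proof -
  have "win x t msum \<in> space (PX msum)"
    by (rule win_space) (use assms in auto)
  then have "\<bar>fsm (win x t msum)\<bar> \<le> Bs" by (rule Bs)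
  then show ?thesis unfolding Gs_def using Es_bound abs_triangle_ineq4[of "fsm (win x t msum)" Es] by linarith
qed

lemma Gl_bound:
  assumes "\<forall>i\<in>{1..n}. x i \<in> X" "t \<ge> 1" "t + mlb \<le> n + 1"
  shows "\<bar>Gl x t\<bar> \<le> 2 * Bl"
proof -
  have "win x t mlb \<in> space (PX mlb)"
    by (rule win_space) (use assms in auto)
  then have "\<bar>flb (win x t mlb)\<bar> \<le> Bl" by (rule Bl)
  then show ?thesis unfolding Gl_def using El_bound abs_triangle_ineq4[of "flb (win x t mlb)" El] by linarith
qed

lemma Eb_le1: "Eb j \<le> 1"
proof -
  interpret prob_space "H0 P0" by (rule H0_prob)
  show ?thesis unfolding Eb_def Esb_def by (rule prob_le_1)
qed

lemma Gb_bound: "j \<le> K \<Longrightarrow> \<bar>Gb x j t\<bar> \<le> 1"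
  using Eb_le1[of j] Esb_pos[of j] unfolding Gb_def Eb_def by auto

lemma L_facts:
  assumes "n \<ge> n0"
  shows "n div N \<ge> s + h + 2" "N * (n div N) \<le> n" "real n < real N * (real (n div N) + 1)"
proof -
  have "N * (s + h + 2) \<le> n" using assms unfolding n0_def by simp
  then show "n div N \<ge> s + h + 2" using Nsh(1)
    by (simp add: less_eq_div_iff_mult_less_eq mult.commute)
  show "N * (n div N) \<le> n" by simp
  have m1: "n mod N < N" using Nsh(1) by simp
  have m2: "N * (n div N) + n mod N = n" by simp
  have "n < N * (n div N) + N" using m1 m2 by linarith
  then have "real n < real N * real (n div N) + real N" by (metis of_nat_add of_nat_less_iff of_nat_mult)
  then show "real n < real N * (real (n div N) + 1)" by (simp add: algebra_simps)
qed


definition "Cs = (4 * Bs * (real msum - 1) + 2 * Bs * (real N * (real s + real h + 2))) / \<sigma>s"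

lemma sum_abs_bound:
  fixes G :: "nat \<Rightarrow> real"
  assumes "\<And>t. t \<in> T \<Longrightarrow> \<bar>G t\<bar> \<le> B"
  shows "\<bar>sum G T\<bar> \<le> B * real (card T)"
proof -
  have "\<bar>sum G T\<bar> \<le> sum (\<lambda>t. \<bar>G t\<bar>) T" by (rule sum_abs)
  also have "\<dots> \<le> sum (\<lambda>t. B) T" by (rule sum_mono) (use assms in auto)
  finally show ?thesis by (simp add: mult.commute)
qed

lemma Tsum_approx:
  assumes n: "n \<ge> n0" and x: "\<forall>i\<in>{1..n}. x i \<in> X"
  shows "\<bar>Tsum P0 msum fsm n x - (\<Sum>k=1..Nlb. Ycal P0 msum fsm mlb flb Nlb Lsb K fsb \<alpha> N s h n x k (K+2))\<bar>
         \<le> Cs / sqrt (real n)"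
proof -
  define L where "L = n div N"
  note Lf = L_facts[OF n, folded L_def]
  define S where "S = (\<Union>k\<in>{1..N}. Aset L h s h k)"
  define T where "T = {1..n + 1 - msum}"
  have nm: "n \<ge> 2 * msum" using n unfolding n0_def by simp
  have hs: "h \<le> s" by (rule h_le_s)
  have sm: "h + msum \<le> s + 1" using Nsh(4) by (simp add: max_def split: if_splits)
  have Y: "(\<Sum>k=1..Nlb. Ycal P0 msum fsm mlb flb Nlb Lsb K fsb \<alpha> N s h n x k (K+2))
      = sum (Gs x) S / (\<sigma>s * sqrt (real n))"
  proof -
    have "(\<Sum>k=1..Nlb. Ycal P0 msum fsm mlb flb Nlb Lsb K fsb \<alpha> N s h n x k (K+2))
        = (\<Sum>k=1..N. (\<Sum>t\<in>Aset L h s h k. Gs x t) / (\<sigma>s * sqrt (real n)))"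
      unfolding sumY Xcal_K2 L_def by (rule refl)
    also have "\<dots> = (\<Sum>k=1..N. \<Sum>t\<in>Aset L h s h k. Gs x t) / (\<sigma>s * sqrt (real n))"
      by (simp add: sum_divide_distrib)
    also have "(\<Sum>k=1..N. \<Sum>t\<in>Aset L h s h k. Gs x t) = sum (Gs x) S"
      unfolding S_def by (rule union_sum[of h 1 h]) (use hs Nsh(3) in auto)
    finally show ?thesis .
  qed
  have Tsum: "Tsum P0 msum fsm n x = sum (Gs x) T / (\<sigma>s * sqrt (real (n + 1 - msum)))"
    unfolding Tsum_def Gs_def Es_def \<sigma>s_def T_def by (rule refl)
  have ST: "S \<subseteq> T"
  proof
    fix t assume "t \<in> S"
    then obtain k where k: "k \<in> {1..N}" and t: "t \<in> Aset L h s h k" unfolding S_def by blast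
    have b: "L * (k - 1) < 1 * t \<and> 1 * t + s \<le> L * k + h"
      by (rule Aset_bounds[of h 1 h]) (use t in auto)
    have "L * k \<le> L * N" using k by (intro mult_le_mono2) auto
    moreover have "L * N \<le> n" using Lf(2) by (simp add: mult.commute)
    ultimately have "L * k \<le> n" by linarith
    then show "t \<in> T" unfolding T_def using b sm by auto
  qed
  have GT: "\<And>t. t \<in> T \<Longrightarrow> \<bar>Gs x t\<bar> \<le> 2 * Bs"
    by (rule Gs_bound[OF x]) (auto simp: T_def)
  have cardS: "real (card S) \<ge> real N * ((real L - real s - real h) / real 1 - 1)"
  proof -
    have "real (card S) \<ge> real (card {1..N}) * ((real L - real s - real h) / real 1 - 1)"
      unfolding S_def by (rule union_card[of h 1 h]) (use hs Nsh(3) Lf(1) in auto)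
    then show ?thesis by simp
  qed
  have cardT: "real (card T) = real n + 1 - real msum" unfolding T_def using nm by (simp add: of_nat_diff)
  have D: "\<bar>sum (Gs x) S - sum (Gs x) T\<bar> \<le> 2 * Bs * (real (card T) - real (card S)) + 2 * Bs * (real (card T) - real (card T))"
    by (rule sum_outer) (use ST GT in \<open>auto simp: T_def\<close>)
  have "real (card T) - real (card S) \<le> real N * (real s + real h + 2)"
    using cardS cardT Lf(3) pos(1) by (simp add: algebra_simps)
  then have D2: "\<bar>sum (Gs x) T - sum (Gs x) S\<bar> \<le> 2 * Bs * (real N * (real s + real h + 2))"
    using D Bs_nn by (simp add: abs_minus_commute) (meson mult_left_mono order_trans zero_le_numeral mult_nonneg_nonneg)
  have A: "\<bar>sum (Gs x) T\<bar> \<le> 2 * Bs * real n"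
  proof -
    have "\<bar>sum (Gs x) T\<bar> \<le> 2 * Bs * real (card T)" by (rule sum_abs_bound) (rule GT)
    also have "\<dots> \<le> 2 * Bs * real n" using cardT pos(1) Bs_nn by (intro mult_left_mono) auto
    finally show ?thesis .
  qed
  have a: "1 \<le> real (n + 1 - msum)" "real (n + 1 - msum) \<le> real n" "real n \<le> 2 * real (n + 1 - msum)"
    using nm pos(1) by (auto simp: of_nat_diff)
  have "\<bar>sum (Gs x) T / (\<sigma>s * sqrt (real (n + 1 - msum))) - sum (Gs x) S / (\<sigma>s * sqrt (real n))\<bar>
      \<le> (2 * (2 * Bs) * (real n - real (n + 1 - msum)) + 2 * Bs * (real N * (real s + real h + 2))) / (\<sigma>s * sqrt (real n))"
    by (rule comb_sum[OF \<sigma>s_pos a A D2])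
  also have "real n - real (n + 1 - msum) = real msum - 1" using nm by (simp add: of_nat_diff)
  also have "(2 * (2 * Bs) * (real msum - 1) + 2 * Bs * (real N * (real s + real h + 2))) / (\<sigma>s * sqrt (real n))
      = Cs / sqrt (real n)" unfolding Cs_def by simp
  finally show ?thesis unfolding Tsum Y .
qed


definition "Dlb = 2 * Bl * (2 * real N + 1 + real q * (real s + real h + 1)) / \<sigma>l"
definition "Clb = 4 * real Nlb * Dlb + 2 * real Nlb * Dlb\<^sup>2 + 2 * (real Nlb)\<^sup>2"

lemma Llb_facts:
  assumes n: "n \<ge> n0"
  shows "q * (n div N) \<le> n div Nlb" "n div Nlb \<le> q * (n div N) + q" "Nlb * (n div Nlb) \<le> n"
    "real n \<le> 2 * real Nlb * real (n div Nlb)" "\<bar>real n - real Nlb * real (n div Nlb)\<bar> \<le> real Nlb"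
    "n div Nlb \<ge> 1"
proof -
  define L where "L = n div N"
  note Lf = L_facts[OF n, folded L_def]
  have "q * L * Nlb \<le> n" using Lf(2) Nq by (simp add: algebra_simps)
  then show a: "q * L \<le> n div Nlb" using pos(3) by (simp add: less_eq_div_iff_mult_less_eq)
  have mm1: "n mod N < N" using Nsh(1) by simp
  have mm2: "N * L + n mod N = n" unfolding L_def by simp
  have "n < N * L + N" using mm1 mm2 by linarith
  then have "n < (q * L + q) * Nlb" using Nq by (simp add: algebra_simps)
  then have "n div Nlb < q * L + q" using pos(3) by (simp add: div_less_iff_less_mult)
  then show "n div Nlb \<le> q * L + q" by simp
  show "Nlb * (n div Nlb) \<le> n" by simp
  have m1: "n mod Nlb < Nlb" using pos(3) by simp
  have m2: "Nlb * (n div Nlb) + n mod Nlb = n" by simp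
  have "L \<ge> 1" using Lf(1) by simp
  then have qL: "q * L \<ge> 1" using q_pos by simp
  then show "n div Nlb \<ge> 1" using a by linarith
  then have "Nlb \<le> Nlb * (n div Nlb)" by simp
  then have "n \<le> 2 * Nlb * (n div Nlb)" using m1 m2 by linarith
  then show "real n \<le> 2 * real Nlb * real (n div Nlb)" by (metis of_nat_le_iff of_nat_mult of_nat_numeral)
  have "real n = real Nlb * real (n div Nlb) + real (n mod Nlb)" using m2 by (metis of_nat_add of_nat_mult)
  then show "\<bar>real n - real Nlb * real (n div Nlb)\<bar> \<le> real Nlb" using m1 by simp
qed

lemma Tlb_block:
  assumes n: "n \<ge> n0" and x: "\<forall>i\<in>{1..n}. x i \<in> X" and k: "k \<in> {1..Nlb}"
  shows "\<bar>(Wlb Nlb mlb flb n x k - (real (n div Nlb) - real mlb + 1) * El)\<^sup>2 / (real (n div Nlb) * \<sigma>l\<^sup>2)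
          - real Nlb * (Ycal P0 msum fsm mlb flb Nlb Lsb K fsb \<alpha> N s h n x k (K+1))\<^sup>2\<bar>
         \<le> Clb * (1 + (Ycal P0 msum fsm mlb flb Nlb Lsb K fsb \<alpha> N s h n x k (K+1))\<^sup>2) / sqrt (real n)"
proof -
  define L where "L = n div N"
  define Llb where "Llb = n div Nlb"
  note Lf = L_facts[OF n, folded L_def]
  note Ll = Llb_facts[OF n, folded L_def Llb_def]
  define KK where "KK = {q * (k - 1) + 1..q * k}"
  define U where "U = (\<Union>k'\<in>KK. Aset L h s h k')"
  define V where "V = {Llb * (k - 1) + 1..Llb * k + 1 - mlb}"
  define Out where "Out = {L * q * (k - 1) + 1..Llb * k + 1 - mlb}"
  have hs: "h \<le> s" by (rule h_le_s)
  have sm: "h + mlb \<le> s + 1" using Nsh(4) by (simp add: max_def split: if_splits)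
  have k1: "k \<ge> 1" "k \<le> Nlb" using k by auto
  have "L \<le> q * L" using q_pos by simp
  then have Lmlb: "Llb \<ge> mlb" using Lf(1) Ll(1) sm by linarith
  have "q * k \<le> q * Nlb" using k1 by simp
  then have qk: "q * k \<le> N" using Nq by simp
  have Y: "Ycal P0 msum fsm mlb flb Nlb Lsb K fsb \<alpha> N s h n x k (K+1) = sum (Gl x) U / (\<sigma>l * sqrt (real n))"
  proof -
    have "Ycal P0 msum fsm mlb flb Nlb Lsb K fsb \<alpha> N s h n x k (K+1)
        = (\<Sum>k'\<in>KK. (\<Sum>t\<in>Aset L h s h k'. Gl x t) / (\<sigma>l * sqrt (real n)))"
      unfolding Ycal_blk[OF k1(1)] Xcal_K1 L_def KK_def by (rule refl)
    also have "\<dots> = (\<Sum>k'\<in>KK. \<Sum>t\<in>Aset L h s h k'. Gl x t) / (\<sigma>l * sqrt (real n))"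
      by (simp add: sum_divide_distrib)
    also have "(\<Sum>k'\<in>KK. \<Sum>t\<in>Aset L h s h k'. Gl x t) = sum (Gl x) U"
      unfolding U_def by (rule union_sum[of h 1 h]) (use hs Nsh(3) in \<open>auto simp: KK_def\<close>)
    finally show ?thesis .
  qed
  have cardV: "card V = Llb + 1 - mlb" unfolding V_def using Lmlb k1
    by (cases k) (auto simp: algebra_simps)
  have W: "Wlb Nlb mlb flb n x k - (real Llb - real mlb + 1) * El = sum (Gl x) V"
  proof -
    have "sum (Gl x) V = (\<Sum>t\<in>V. flb (win x t mlb)) - real (card V) * El"
      unfolding Gl_def by (simp add: sum_subtractf)
    moreover have "real (card V) = real Llb - real mlb + 1" using cardV Lmlb by (simp add: of_nat_diff)
    ultimately show ?thesis unfolding Wlb_def Let_def Llb_def[symmetric] V_def by simp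
  qed
  have UO: "U \<subseteq> Out"
  proof
    fix t assume "t \<in> U"
    then obtain k' where k': "k' \<in> KK" and t: "t \<in> Aset L h s h k'" unfolding U_def by blast
    have b: "L * (k' - 1) < 1 * t \<and> 1 * t + s \<le> L * k' + h"
      by (rule Aset_bounds[of h 1 h]) (use t in auto)
    have "q * (k - 1) \<le> k' - 1" using k' unfolding KK_def by auto
    then have m: "L * (q * (k - 1)) \<le> L * (k' - 1)" by (rule mult_le_mono2)
    have eq: "L * q * (k - 1) = L * (q * (k - 1))" by (simp add: mult.assoc)
    have t1: "L * q * (k - 1) + 1 \<le> t" using m b eq by linarith
    have "L * k' \<le> L * (q * k)" using k' unfolding KK_def by (intro mult_le_mono2) auto
    also have "L * (q * k) = (q * L) * k" by (simp add: algebra_simps)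
    also have "\<dots> \<le> Llb * k" using Ll(1) by (intro mult_le_mono1)
    finally have "t + s \<le> Llb * k + h" using b by simp
    then have "t \<le> Llb * k + 1 - mlb" using sm by linarith
    then show "t \<in> Out" unfolding Out_def using t1 by simp
  qed
  have VO: "V \<subseteq> Out"
  proof -
    have "L * q * (k - 1) \<le> Llb * (k - 1)" using Ll(1) by (simp add: mult.commute)
    then show ?thesis unfolding V_def Out_def by auto
  qed
  have GO: "\<And>t. t \<in> Out \<Longrightarrow> \<bar>Gl x t\<bar> \<le> 2 * Bl"
  proof -
    fix t assume t: "t \<in> Out"
    have "Llb * k \<le> Llb * Nlb" using k1 by simp
    moreover have "Llb * Nlb \<le> n" using Ll(3) by (simp add: mult.commute)
    ultimately have "Llb * k \<le> n" by linarith
    then show "\<bar>Gl x t\<bar> \<le> 2 * Bl" using t Lmlb unfolding Out_def by (intro Gl_bound[OF x]) auto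
  qed
  have cardU: "real (card U) \<ge> real q * ((real L - real s - real h) / real 1 - 1)"
  proof -
    have "real (card U) \<ge> real (card KK) * ((real L - real s - real h) / real 1 - 1)"
      unfolding U_def by (rule union_card[of h 1 h]) (use hs Nsh(3) Lf(1) in \<open>auto simp: KK_def\<close>)
    moreover have "card KK = q" unfolding KK_def using k1 by (cases k) (auto simp: algebra_simps)
    ultimately show ?thesis by simp
  qed
  have cardO: "real (card Out) = real Llb * real k + 1 - real mlb - real L * real q * (real k - 1)"
  proof -
    have e1: "Llb * k = Llb * (k - 1) + Llb" using k1 by (cases k) auto
    have e2: "L * q * (k - 1) \<le> Llb * (k - 1)" using Ll(1) by (simp add: mult.commute)
    have "L * q * (k - 1) \<le> Llb * k + 1 - mlb" using e1 e2 Lmlb by linarith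
    note le = this
    have c1: "card Out = (Llb * k + 1 - mlb) - L * q * (k - 1)" unfolding Out_def by simp
    have "Llb \<le> Llb * k" using k1 by simp
    then have "mlb \<le> Llb * k + 1" using Lmlb by linarith
    then have r1: "real (Llb * k + 1 - mlb) = real Llb * real k + 1 - real mlb" by (simp add: of_nat_diff)
    have r2: "real (L * q * (k - 1)) = real L * real q * (real k - 1)" using k1 by (simp add: of_nat_diff)
    show ?thesis unfolding c1 of_nat_diff[OF le] r1 r2 by simp
  qed
  have D: "\<bar>sum (Gl x) U - sum (Gl x) V\<bar> \<le> 2 * Bl * (real (card Out) - real (card U)) + 2 * Bl * (real (card Out) - real (card V))"
    by (rule sum_outer) (use UO VO GO in \<open>auto simp: Out_def\<close>)
  have cardV': "real (card V) = real Llb + 1 - real mlb" using cardV Lmlb by (simp add: of_nat_diff)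
  have i1: "real Llb * real k \<le> real q * real L * real k + real q * real k"
  proof -
    have "real Llb \<le> real q * real L + real q" using Ll(2) by (metis of_nat_add of_nat_le_iff of_nat_mult)
    then have "real Llb * real k \<le> (real q * real L + real q) * real k" by (rule mult_right_mono) simp
    then show ?thesis by (simp add: algebra_simps)
  qed
  have i2: "real q * real k \<le> real N" using qk by (metis of_nat_le_iff of_nat_mult)
  have i3: "real Llb * (real k - 1) \<le> real L * real q * (real k - 1) + real q * (real k - 1)"
  proof -
    have "real Llb \<le> real q * real L + real q" using Ll(2) by (metis of_nat_add of_nat_le_iff of_nat_mult)
    then have "real Llb * (real k - 1) \<le> (real q * real L + real q) * (real k - 1)" by (rule mult_right_mono) (use k1 in simp)
    then show ?thesis by (simp add: algebra_simps)
  qed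
  have i4: "real q * (real k - 1) \<le> real N" using i2 q_pos by (simp add: algebra_simps)
  have e1: "real L * real q * (real k - 1) = real q * real L * real k - real q * real L" by (simp add: algebra_simps)
  have e2: "real q * ((real L - real s - real h) / real 1 - 1) = real q * real L - real q * (real s + real h + 1)"
    by (simp add: algebra_simps)
  have e3: "real Llb * (real k - 1) = real Llb * real k - real Llb" by (simp add: algebra_simps)
  have e4: "real q * real L * (real k - 1) = real q * real L * real k - real q * real L" by (simp add: algebra_simps)
  have c1: "real (card Out) - real (card U) \<le> real N + 1 + real q * (real s + real h + 1)"
    using cardO cardU e1 e2 i1 i2 by linarith
  have c2: "real (card Out) - real (card V) \<le> real N"
  proof -
    have "real (card Out) - real (card V) = real Llb * (real k - 1) - real L * real q * (real k - 1)"
      using cardO cardV' e3 by linarith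
    then show ?thesis using i3 i4 by linarith
  qed
  have D2: "\<bar>sum (Gl x) V - sum (Gl x) U\<bar> \<le> 2 * Bl * (2 * real N + 1 + real q * (real s + real h + 1))"
  proof -
    have "2 * Bl * (real (card Out) - real (card U)) + 2 * Bl * (real (card Out) - real (card V))
        \<le> 2 * Bl * (real N + 1 + real q * (real s + real h + 1)) + 2 * Bl * real N"
      using c1 c2 Bl_nn by (intro add_mono mult_left_mono) auto
    then show ?thesis using D by (simp add: abs_minus_commute algebra_simps)
  qed
  define a where "a = sum (Gl x) V / \<sigma>l"
  define b where "b = sum (Gl x) U / \<sigma>l"
  have sl: "\<sigma>l > 0" by (rule \<sigma>l_pos)
  have ab: "\<bar>a - b\<bar> \<le> Dlb"
  proof -
    have "a - b = (sum (Gl x) V - sum (Gl x) U) / \<sigma>l" unfolding a_def b_def by (simp add: diff_divide_distrib)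
    then have "\<bar>a - b\<bar> = \<bar>sum (Gl x) V - sum (Gl x) U\<bar> / \<sigma>l" using sl by simp
    also have "\<dots> \<le> 2 * Bl * (2 * real N + 1 + real q * (real s + real h + 1)) / \<sigma>l"
      using D2 sl by (intro divide_right_mono) auto
    finally show ?thesis unfolding Dlb_def .
  qed
  have Dnn: "0 \<le> Dlb" unfolding Dlb_def using Bl_nn sl by simp
  have n1: "1 \<le> real n" using Ll(6) Ll(3) by (metis One_nat_def le_trans mult_le_mono nat_mult_1 of_nat_1 of_nat_le_iff pos(3))
  have sq: "\<bar>a\<^sup>2 / real Llb - real Nlb * b\<^sup>2 / real n\<bar> \<le> Clb * (1 + b\<^sup>2 / real n) / sqrt (real n)"
    unfolding Clb_def
    by (rule sq_approx[OF Dnn _ n1 _ Ll(4) Ll(5) ab]) (use pos(3) Ll(6) in auto)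
  have T1: "(Wlb Nlb mlb flb n x k - (real (n div Nlb) - real mlb + 1) * El)\<^sup>2 / (real (n div Nlb) * \<sigma>l\<^sup>2)
      = a\<^sup>2 / real Llb"
    unfolding Llb_def[symmetric] W a_def using sl by (simp add: power_divide field_simps)
  have Y2: "(Ycal P0 msum fsm mlb flb Nlb Lsb K fsb \<alpha> N s h n x k (K+1))\<^sup>2 = b\<^sup>2 / real n"
    unfolding Y b_def using sl n1 by (simp add: power_divide power_mult_distrib)
  show ?thesis unfolding T1 Y2 using sq by simp
qed


lemma Tlb_approx:
  assumes n: "n \<ge> n0" and x: "\<forall>i\<in>{1..n}. x i \<in> X"
  shows "\<bar>Tlb P0 Nlb mlb flb n x - real Nlb * (\<Sum>k=1..Nlb. (Ycal P0 msum fsm mlb flb Nlb Lsb K fsb \<alpha> N s h n x k (K+1))\<^sup>2)\<bar>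
         \<le> Clb * (real Nlb + (\<Sum>k=1..Nlb. (Ycal P0 msum fsm mlb flb Nlb Lsb K fsb \<alpha> N s h n x k (K+1))\<^sup>2)) / sqrt (real n)"
proof -
  let ?Y = "\<lambda>k. Ycal P0 msum fsm mlb flb Nlb Lsb K fsb \<alpha> N s h n x k (K+1)"
  let ?T = "\<lambda>k. (Wlb Nlb mlb flb n x k - (real (n div Nlb) - real mlb + 1) * El)\<^sup>2 / (real (n div Nlb) * \<sigma>l\<^sup>2)"
  have e: "Tlb P0 Nlb mlb flb n x - real Nlb * (\<Sum>k=1..Nlb. (?Y k)\<^sup>2) = (\<Sum>k=1..Nlb. ?T k - real Nlb * (?Y k)\<^sup>2)"
    unfolding Tlb_def Let_def El_def[symmetric] \<sigma>l_def[symmetric] by (simp add: sum_subtractf sum_distrib_left)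
  have "\<bar>\<Sum>k=1..Nlb. ?T k - real Nlb * (?Y k)\<^sup>2\<bar> \<le> (\<Sum>k=1..Nlb. \<bar>?T k - real Nlb * (?Y k)\<^sup>2\<bar>)"
    by (rule sum_abs)
  also have "\<dots> \<le> (\<Sum>k=1..Nlb. Clb * (1 + (?Y k)\<^sup>2) / sqrt (real n))"
    by (rule sum_mono) (rule Tlb_block[OF n x], simp)
  also have "\<dots> = Clb * (real Nlb + (\<Sum>k=1..Nlb. (?Y k)\<^sup>2)) / sqrt (real n)"
    by (simp add: sum_divide_distrib[symmetric] sum_distrib_left[symmetric] sum.distrib)
  finally show ?thesis unfolding e .
qed

lemma div_facts:
  assumes "d \<ge> 1" "d \<le> n"
  shows "real n \<le> 2 * real d * real (n div d)" "\<bar>real n - real d * real (n div d)\<bar> \<le> real d"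
    "n div d \<ge> 1" "real (n div d) \<le> real n / real d" "d * (n div d) \<le> n"
proof -
  have m1: "n mod d < d" using assms by simp
  have m2: "d * (n div d) + n mod d = n" by simp
  show "n div d \<ge> 1" using assms by (simp add: less_eq_div_iff_mult_less_eq)
  then have "d \<le> d * (n div d)" by simp
  then have "n \<le> 2 * d * (n div d)" using m1 m2 by linarith
  then show "real n \<le> 2 * real d * real (n div d)" by (metis of_nat_le_iff of_nat_mult of_nat_numeral)
  have r: "real n = real d * real (n div d) + real (n mod d)" using m2 by (metis of_nat_add of_nat_mult)
  then show "\<bar>real n - real d * real (n div d)\<bar> \<le> real d" using m1 by simp
  show "real (n div d) \<le> real n / real d" using r assms by (simp add: field_simps)
  show "d * (n div d) \<le> n" by simp
qed

definition "Dsb j = real N * (real s + real h + 2) / sqrt (Eb j)"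
definition "Csb j = 4 * real Lsb * Dsb j + 2 * real Lsb * (Dsb j)\<^sup>2 + 2 * (real Lsb)\<^sup>2"

lemma Tsb_block:
  assumes n: "n \<ge> n0" and j: "j \<le> K"
  shows "\<bar>(wsb Lsb fsb \<alpha> n x j - real (n div Lsb) * Eb j)\<^sup>2 / (real (n div Lsb) * Eb j)
          - real Lsb * (\<Sum>k=1..Nlb. Ycal P0 msum fsm mlb flb Nlb Lsb K fsb \<alpha> N s h n x k j)\<^sup>2\<bar>
         \<le> Csb j * (1 + (\<Sum>k=1..Nlb. Ycal P0 msum fsm mlb flb Nlb Lsb K fsb \<alpha> N s h n x k j)\<^sup>2) / sqrt (real n)"
proof -
  define L where "L = n div N"
  define Nsb where "Nsb = n div Lsb"
  note Lf = L_facts[OF n, folded L_def]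
  have hs: "h \<le> s" by (rule h_le_s)
  have Ln: "Lsb \<le> n"
  proof -
    have "Lsb * 1 \<le> Lsb * hb" using hb_pos by (intro mult_le_mono2)
    then have "Lsb \<le> h" using h_hb by simp
    also have "h \<le> n"
    proof -
      have "h \<le> s + h + 2" by simp
      also have "\<dots> \<le> n div N" using Lf(1) unfolding L_def .
      also have "\<dots> \<le> n" by simp
      finally show ?thesis .
    qed
    finally show ?thesis .
  qed
  note df = div_facts[OF pos(4) Ln, folded Nsb_def]
  define S where "S = (\<Union>k\<in>{1..N}. Aset L h s hb k)"
  define T where "T = {1..Nsb}"
  have Eb: "Eb j > 0" using Esb_pos[OF j] unfolding Eb_def .
  have Y: "(\<Sum>k=1..Nlb. Ycal P0 msum fsm mlb flb Nlb Lsb K fsb \<alpha> N s h n x k j)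
      = sum (Gb x j) S / (sqrt (Eb j) * sqrt (real n))"
  proof -
    have "(\<Sum>k=1..Nlb. Ycal P0 msum fsm mlb flb Nlb Lsb K fsb \<alpha> N s h n x k j)
        = (\<Sum>k=1..N. (\<Sum>t\<in>Aset L h s hb k. Gb x j t) / (sqrt (Eb j) * sqrt (real n)))"
      unfolding sumY Xcal_j[OF j] L_def by (rule refl)
    also have "\<dots> = (\<Sum>k=1..N. \<Sum>t\<in>Aset L h s hb k. Gb x j t) / (sqrt (Eb j) * sqrt (real n))"
      by (simp add: sum_divide_distrib)
    also have "(\<Sum>k=1..N. \<Sum>t\<in>Aset L h s hb k. Gb x j t) = sum (Gb x j) S"
      unfolding S_def by (rule union_sum[of h Lsb hb]) (use hs Nsh(3) h_hb pos(4) in auto)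
    finally show ?thesis .
  qed
  have W: "wsb Lsb fsb \<alpha> n x j - real Nsb * Eb j = sum (Gb x j) T"
    unfolding wsb_def Gb_def T_def Nsb_def by (simp add: sum_subtractf)
  have ST: "S \<subseteq> T"
  proof
    fix t assume "t \<in> S"
    then obtain k where k: "k \<in> {1..N}" and t: "t \<in> Aset L h s hb k" unfolding S_def by blast
    have b: "L * (k - 1) < Lsb * t \<and> Lsb * t + s \<le> L * k + h"
      by (rule Aset_bounds[OF h_hb t pos(4)])
    have "L * k \<le> L * N" using k by (intro mult_le_mono2) auto
    moreover have "L * N \<le> n" using Lf(2) by (simp add: mult.commute)
    ultimately have "Lsb * t \<le> n" using b hs by linarith
    then have "t \<le> Nsb" unfolding Nsb_def using pos(4) by (simp add: less_eq_div_iff_mult_less_eq mult.commute)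
    moreover have "t \<ge> 1" using b by (cases t) auto
    ultimately show "t \<in> T" unfolding T_def by simp
  qed
  have GT: "\<And>t. t \<in> T \<Longrightarrow> \<bar>Gb x j t\<bar> \<le> 1" using Gb_bound[OF j] by blast
  have cardS: "real (card S) \<ge> real N * ((real L - real s - real h) / real Lsb - 1)"
  proof -
    have "real (card S) \<ge> real (card {1..N}) * ((real L - real s - real h) / real Lsb - 1)"
      unfolding S_def by (rule union_card[of h Lsb hb]) (use hs hb_pos h_hb pos(4) Lf(1) in auto)
    then show ?thesis by simp
  qed
  have D: "\<bar>sum (Gb x j) S - sum (Gb x j) T\<bar> \<le> 1 * (real (card T) - real (card S)) + 1 * (real (card T) - real (card T))"
    by (rule sum_outer) (use ST GT in \<open>auto simp: T_def\<close>)
  have cT: "real (card T) = real Nsb" unfolding T_def by simp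
  have "real (card T) - real (card S) \<le> real N * (real s + real h + 2)"
  proof -
    have "real Nsb \<le> real n / real Lsb" by (rule df(4))
    also have "\<dots> \<le> real N * (real L + 1) / real Lsb" using Lf(3) pos(4) by (intro divide_right_mono) auto
    finally have a: "real Nsb \<le> real N * (real L + 1) / real Lsb" .
    have "real N * (real L + 1) / real Lsb - real N * ((real L - real s - real h) / real Lsb - 1)
        = real N * (real s + real h + 1) / real Lsb + real N"
      using pos(4) by (simp add: field_simps)
    also have "\<dots> \<le> real N * (real s + real h + 1) + real N"
    proof -
      have "real N * (real s + real h + 1) / real Lsb \<le> real N * (real s + real h + 1) / 1"
        using pos(4) by (intro divide_left_mono) auto
      then show ?thesis by simp
    qed
    finally show ?thesis using a cT cardS by (simp add: algebra_simps)
  qed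
  then have D2: "\<bar>sum (Gb x j) T - sum (Gb x j) S\<bar> \<le> real N * (real s + real h + 2)"
    using D by (simp add: abs_minus_commute)
  define a where "a = sum (Gb x j) T / sqrt (Eb j)"
  define b where "b = sum (Gb x j) S / sqrt (Eb j)"
  have se: "sqrt (Eb j) > 0" using Eb by simp
  have ab: "\<bar>a - b\<bar> \<le> Dsb j"
  proof -
    have "a - b = (sum (Gb x j) T - sum (Gb x j) S) / sqrt (Eb j)" unfolding a_def b_def by (simp add: diff_divide_distrib)
    then have "\<bar>a - b\<bar> = \<bar>sum (Gb x j) T - sum (Gb x j) S\<bar> / sqrt (Eb j)" using se by simp
    also have "\<dots> \<le> real N * (real s + real h + 2) / sqrt (Eb j)"
      using D2 se by (intro divide_right_mono) auto
    finally show ?thesis unfolding Dsb_def .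
  qed
  have Dnn: "0 \<le> Dsb j" unfolding Dsb_def using se by simp
  have n1: "1 \<le> real n" using Ln pos(4) by simp
  have sq: "\<bar>a\<^sup>2 / real Nsb - real Lsb * b\<^sup>2 / real n\<bar> \<le> Csb j * (1 + b\<^sup>2 / real n) / sqrt (real n)"
    unfolding Csb_def
    by (rule sq_approx[OF Dnn _ n1 _ df(1) df(2) ab]) (use pos(4) df(3) in auto)
  have T1: "(wsb Lsb fsb \<alpha> n x j - real (n div Lsb) * Eb j)\<^sup>2 / (real (n div Lsb) * Eb j) = a\<^sup>2 / real Nsb"
    unfolding Nsb_def[symmetric] W a_def using Eb by (simp add: power_divide)
  have Y2: "(\<Sum>k=1..Nlb. Ycal P0 msum fsm mlb flb Nlb Lsb K fsb \<alpha> N s h n x k j)\<^sup>2 = b\<^sup>2 / real n"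
    unfolding Y b_def using se n1 by (simp add: power_divide power_mult_distrib)
  show ?thesis unfolding T1 Y2 using sq by simp
qed


definition "Csbt = (\<Sum>j=0..K. Csb j)"

lemma Csb_nn: "j \<le> K \<Longrightarrow> Csb j \<ge> 0"
proof -
  assume j: "j \<le> K"
  have "Eb j > 0" using Esb_pos[OF j] unfolding Eb_def .
  then have "Dsb j \<ge> 0" unfolding Dsb_def by simp
  then show ?thesis unfolding Csb_def by simp
qed

lemma Tsb_approx:
  assumes n: "n \<ge> n0"
  shows "\<bar>Tsb P0 Lsb K fsb \<alpha> n x - real Lsb * (\<Sum>j=0..K. (\<Sum>k=1..Nlb. Ycal P0 msum fsm mlb flb Nlb Lsb K fsb \<alpha> N s h n x k j)\<^sup>2)\<bar>
         \<le> Csbt * (1 + (\<Sum>j=0..K. (\<Sum>k=1..Nlb. Ycal P0 msum fsm mlb flb Nlb Lsb K fsb \<alpha> N s h n x k j)\<^sup>2)) / sqrt (real n)"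
proof -
  let ?Z = "\<lambda>j. (\<Sum>k=1..Nlb. Ycal P0 msum fsm mlb flb Nlb Lsb K fsb \<alpha> N s h n x k j)"
  let ?T = "\<lambda>j. (wsb Lsb fsb \<alpha> n x j - real (n div Lsb) * Eb j)\<^sup>2 / (real (n div Lsb) * Eb j)"
  define Z where "Z = (\<Sum>j=0..K. (?Z j)\<^sup>2)"
  have Znn: "Z \<ge> 0" unfolding Z_def by (intro sum_nonneg) auto
  have Zj: "(?Z j)\<^sup>2 \<le> Z" if "j \<le> K" for j
    unfolding Z_def using that by (intro member_le_sum) auto
  have e: "Tsb P0 Lsb K fsb \<alpha> n x - real Lsb * (\<Sum>j=0..K. (?Z j)\<^sup>2) = (\<Sum>j=0..K. ?T j - real Lsb * (?Z j)\<^sup>2)"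
    unfolding Tsb_def Let_def Eb_def[symmetric] by (simp add: sum_subtractf sum_distrib_left)
  have "\<bar>\<Sum>j=0..K. ?T j - real Lsb * (?Z j)\<^sup>2\<bar> \<le> (\<Sum>j=0..K. \<bar>?T j - real Lsb * (?Z j)\<^sup>2\<bar>)"
    by (rule sum_abs)
  also have "\<dots> \<le> (\<Sum>j=0..K. Csb j * (1 + (?Z j)\<^sup>2) / sqrt (real n))"
    by (rule sum_mono) (rule Tsb_block[OF n], simp)
  also have "\<dots> \<le> (\<Sum>j=0..K. Csb j * (1 + Z) / sqrt (real n))"
  proof (rule sum_mono)
    fix j assume "j \<in> {0..K}"
    then have j: "j \<le> K" by simp
    have "Csb j * (1 + (?Z j)\<^sup>2) \<le> Csb j * (1 + Z)"
      using Zj[OF j] Csb_nn[OF j] by (intro mult_left_mono) auto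
    then show "Csb j * (1 + (?Z j)\<^sup>2) / sqrt (real n) \<le> Csb j * (1 + Z) / sqrt (real n)"
      by (intro divide_right_mono) auto
  qed
  also have "\<dots> = Csbt * (1 + Z) / sqrt (real n)"
    unfolding Csbt_def by (simp add: sum_divide_distrib[symmetric] sum_distrib_right[symmetric])
  finally show ?thesis unfolding e by (simp only: Z_def)
qed

end



lemma oP1_det:
  fixes Z :: "nat \<Rightarrow> 'w \<Rightarrow> real"
  assumes b: "\<forall>n\<ge>n0. \<forall>\<omega>\<in>space (Q n). \<bar>Z n \<omega>\<bar> \<le> c n" and c: "c \<longlonglongrightarrow> 0"
  shows "oP1 Q Z"
  unfolding oP1_def
proof (intro allI impI)
  fix e :: real assume e: "e > 0"
  have "eventually (\<lambda>n. c n < e) sequentially" using c e by (rule order_tendstoD)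
  moreover have "eventually (\<lambda>n. n \<ge> n0) sequentially" by (rule eventually_ge_at_top)
  ultimately have "eventually (\<lambda>n. measure (Q n) {\<omega> \<in> space (Q n). e < \<bar>Z n \<omega>\<bar>} = 0) sequentially"
  proof eventually_elim
    case (elim n)
    have "{\<omega> \<in> space (Q n). e < \<bar>Z n \<omega>\<bar>} = {}" using b elim by force
    then show ?case by (metis measure_empty)
  qed
  then show "(\<lambda>n. measure (Q n) {\<omega> \<in> space (Q n). e < \<bar>Z n \<omega>\<bar>}) \<longlonglongrightarrow> 0"
    by (rule tendsto_eventually)
qed

lemma oP1_tight:
  fixes Z U :: "nat \<Rightarrow> 'w \<Rightarrow> real"
  assumes Q: "\<And>n. prob_space (Q n)"
    and b: "\<forall>n\<ge>n0. \<forall>\<omega>\<in>space (Q n). \<bar>Z n \<omega>\<bar> \<le> c n * (1 + \<bar>U n \<omega>\<bar>)"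
    and c: "c \<longlonglongrightarrow> 0" and cnn: "\<And>n. c n \<ge> 0"
    and mU: "\<And>n. U n \<in> borel_measurable (Q n)"
    and tight: "\<forall>\<epsilon>>0. \<exists>M. eventually (\<lambda>n. measure (Q n) {\<omega> \<in> space (Q n). M < \<bar>U n \<omega>\<bar>} \<le> \<epsilon>) sequentially"
  shows "oP1 Q Z"
  unfolding oP1_def
proof (intro allI impI)
  fix e :: real assume e: "e > 0"
  show "(\<lambda>n. measure (Q n) {\<omega> \<in> space (Q n). e < \<bar>Z n \<omega>\<bar>}) \<longlonglongrightarrow> 0"
    unfolding tendsto_iff
  proof (intro allI impI)
    fix \<epsilon> :: real assume \<epsilon>: "\<epsilon> > 0"
    obtain M where M: "eventually (\<lambda>n. measure (Q n) {\<omega> \<in> space (Q n). M < \<bar>U n \<omega>\<bar>} \<le> \<epsilon> / 2) sequentially"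
      using tight \<epsilon> by (meson half_gt_zero)
    have "(\<lambda>n. c n * (1 + \<bar>M\<bar>)) \<longlonglongrightarrow> 0 * (1 + \<bar>M\<bar>)" by (intro tendsto_mult c tendsto_const)
    then have "eventually (\<lambda>n. c n * (1 + \<bar>M\<bar>) < e) sequentially" using e by (intro order_tendstoD) auto
    moreover have "eventually (\<lambda>n. n \<ge> n0) sequentially" by (rule eventually_ge_at_top)
    ultimately show "eventually (\<lambda>n. dist (measure (Q n) {\<omega> \<in> space (Q n). e < \<bar>Z n \<omega>\<bar>}) 0 < \<epsilon>) sequentially"
      using M
    proof eventually_elim
      case (elim n)
      interpret prob_space "Q n" by (rule Q)
      have sub: "{\<omega> \<in> space (Q n). e < \<bar>Z n \<omega>\<bar>} \<subseteq> {\<omega> \<in> space (Q n). M < \<bar>U n \<omega>\<bar>}"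
      proof safe
        fix \<omega> assume \<omega>: "\<omega> \<in> space (Q n)" "e < \<bar>Z n \<omega>\<bar>"
        show "M < \<bar>U n \<omega>\<bar>"
        proof (rule ccontr)
          assume "\<not> M < \<bar>U n \<omega>\<bar>"
          then have "\<bar>U n \<omega>\<bar> \<le> \<bar>M\<bar>" by linarith
          then have "c n * (1 + \<bar>U n \<omega>\<bar>) \<le> c n * (1 + \<bar>M\<bar>)" using cnn by (intro mult_left_mono) auto
          then show False using b elim \<omega> by force
        qed
      qed
      have ms: "{\<omega> \<in> space (Q n). M < \<bar>U n \<omega>\<bar>} \<in> sets (Q n)" using mU[of n] by measurable
      have "measure (Q n) {\<omega> \<in> space (Q n). e < \<bar>Z n \<omega>\<bar>} \<le> measure (Q n) {\<omega> \<in> space (Q n). M < \<bar>U n \<omega>\<bar>}"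
        by (rule finite_measure_mono[OF sub ms])
      then show ?case using elim \<epsilon> by simp
    qed
  qed
qed

lemma conv_map:
  assumes cd: "conv_distr Q V S R W" and c: "continuous_on S \<Psi>" and im: "\<Psi> ` S \<subseteq> S'"
  shows "conv_distr Q (\<lambda>n \<omega>. \<Psi> (V n \<omega>)) S' R (\<lambda>r. \<Psi> (W r))"
  unfolding conv_distr_def
proof (intro allI impI)
  fix g :: "_ \<Rightarrow> real" assume g: "continuous_on S' g \<and> bounded (g ` S')"
  have "continuous_on S (\<lambda>v. g (\<Psi> v))"
    using continuous_on_compose2[OF _ c im] g by blast
  moreover have "bounded ((\<lambda>v. g (\<Psi> v)) ` S)"
    using g im by (rule_tac bounded_subset[of "g ` S'"]) auto
  ultimately show "(\<lambda>n. \<integral>\<omega>. g (\<Psi> (V n \<omega>)) \<partial>Q n) \<longlonglongrightarrow> (\<integral>r. g (\<Psi> (W r)) \<partial>R)"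
    using cd unfolding conv_distr_def by blast
qed


lemma tight_of_conv:
  fixes \<Psi> :: "'v::topological_space \<Rightarrow> real"
  assumes Q: "\<And>n. prob_space (Q n)" and R: "prob_space R"
    and cd: "conv_distr Q V S R W" and \<Psi>c: "continuous_on S \<Psi>"
    and mV: "\<And>n. (\<lambda>\<omega>. \<Psi> (V n \<omega>)) \<in> borel_measurable (Q n)"
    and mW: "(\<lambda>r. \<Psi> (W r)) \<in> borel_measurable R"
  shows "\<forall>\<epsilon>>0. \<exists>M. eventually (\<lambda>n. measure (Q n) {\<omega> \<in> space (Q n). M < \<bar>\<Psi> (V n \<omega>)\<bar>} \<le> \<epsilon>) sequentially"
proof (intro allI impI)
  fix \<epsilon> :: real assume \<epsilon>: "\<epsilon> > 0"
  define g where "g M v = min 1 (max 0 (\<bar>\<Psi> v\<bar> - M))" for M :: real and v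
  have gc: "continuous_on S (g M)" for M unfolding g_def by (intro continuous_intros \<Psi>c)
  have g01: "0 \<le> g M v" "g M v \<le> 1" for M v unfolding g_def by auto
  have gb: "bounded (g M ` S)" for M
    unfolding bounded_iff using g01 by (intro exI[of _ 1]) auto
  have gconv: "(\<lambda>n. \<integral>\<omega>. g M (V n \<omega>) \<partial>Q n) \<longlonglongrightarrow> (\<integral>r. g M (W r) \<partial>R)" for M
    using cd gc gb unfolding conv_distr_def by blast
  have mgW: "(\<lambda>r. g M (W r)) \<in> borel_measurable R" for M unfolding g_def using mW by measurable
  have mgV: "(\<lambda>\<omega>. g M (V n \<omega>)) \<in> borel_measurable (Q n)" for M n unfolding g_def using mV[of n] by measurable
  have glim: "(\<lambda>m. \<integral>r. g (real m) (W r) \<partial>R) \<longlonglongrightarrow> (\<integral>r. 0 \<partial>R)"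
  proof (rule integral_dominated_convergence[where w="\<lambda>_. 1"])
    show "(\<lambda>r. 0::real) \<in> borel_measurable R" by simp
    show "(\<lambda>r. g (real m) (W r)) \<in> borel_measurable R" for m by (rule mgW)
    show "integrable R (\<lambda>_. 1::real)"
      using R by (simp add: prob_space.finite_measure finite_measure.integrable_const)
    show "AE r in R. (\<lambda>m. g (real m) (W r)) \<longlonglongrightarrow> 0"
    proof (rule AE_I2)
      fix r
      have "eventually (\<lambda>m. real m \<ge> \<bar>\<Psi> (W r)\<bar>) sequentially"
        by (rule eventually_sequentiallyI[of "nat \<lceil>\<bar>\<Psi> (W r)\<bar>\<rceil>"]) linarith
      then have "eventually (\<lambda>m. g (real m) (W r) = 0) sequentially"
        by eventually_elim (auto simp: g_def)
      then show "(\<lambda>m. g (real m) (W r)) \<longlonglongrightarrow> 0" by (rule tendsto_eventually)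
    qed
    show "AE r in R. norm (g (real m) (W r)) \<le> 1" for m using g01 by auto
  qed
  then have "eventually (\<lambda>m. (\<integral>r. g (real m) (W r) \<partial>R) < \<epsilon>) sequentially"
    using \<epsilon> by (intro order_tendstoD) auto
  then obtain m0 where "\<forall>m\<ge>m0. (\<integral>r. g (real m) (W r) \<partial>R) < \<epsilon>" unfolding eventually_sequentially by blast
  then obtain m where m: "(\<integral>r. g (real m) (W r) \<partial>R) < \<epsilon>" by blast
  have "eventually (\<lambda>n. (\<integral>\<omega>. g (real m) (V n \<omega>) \<partial>Q n) < \<epsilon>) sequentially"
    using gconv[of "real m"] m by (intro order_tendstoD)
  then have "eventually (\<lambda>n. measure (Q n) {\<omega> \<in> space (Q n). real m + 1 < \<bar>\<Psi> (V n \<omega>)\<bar>} \<le> \<epsilon>) sequentially"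
  proof eventually_elim
    case (elim n)
    interpret prob_space "Q n" by (rule Q)
    define A where "A = {\<omega> \<in> space (Q n). real m + 1 < \<bar>\<Psi> (V n \<omega>)\<bar>}"
    have As: "A \<in> sets (Q n)" unfolding A_def using mV[of n] by measurable
    have "measure (Q n) A = (\<integral>\<omega>. indicator A \<omega> \<partial>Q n)"
      using As by (simp add: Int_absorb2 sets.sets_into_space)
    also have "\<dots> \<le> (\<integral>\<omega>. g (real m) (V n \<omega>) \<partial>Q n)"
    proof (rule integral_mono)
      show "integrable (Q n) (indicator A :: _ \<Rightarrow> real)"
        by (rule integrable_const_bound[where B=1]) (use As in auto)
      show "integrable (Q n) (\<lambda>\<omega>. g (real m) (V n \<omega>))"
        by (rule integrable_const_bound[where B=1]) (use g01 mgV in simp_all)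
      show "indicator A \<omega> \<le> g (real m) (V n \<omega>)" if "\<omega> \<in> space (Q n)" for \<omega>
        using g01 by (auto simp: A_def g_def indicator_def)
    qed
    finally show ?case using elim unfolding A_def by simp
  qed
  then show "\<exists>M. eventually (\<lambda>n. measure (Q n) {\<omega> \<in> space (Q n). M < \<bar>\<Psi> (V n \<omega>)\<bar>} \<le> \<epsilon>) sequentially"
    by blast
qed


lemma slutsky:
  fixes \<Phi> :: "'v::topological_space \<Rightarrow> 'b::euclidean_space" and T :: "nat \<Rightarrow> 'w \<Rightarrow> 'b"
  assumes Q: "\<And>n. prob_space (Q n)"
    and cd: "conv_distr Q V S R W" and \<Phi>c: "continuous_on S \<Phi>"
    and mV: "\<And>n. (\<lambda>\<omega>. \<Phi> (V n \<omega>)) \<in> borel_measurable (Q n)"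
    and mT: "\<And>n. T n \<in> borel_measurable (Q n)"
    and tight: "\<forall>\<epsilon>>0. \<exists>M. eventually (\<lambda>n. measure (Q n) {\<omega> \<in> space (Q n). M < \<bar>norm (\<Phi> (V n \<omega>))\<bar>} \<le> \<epsilon>) sequentially"
    and b: "\<forall>n\<ge>n0. \<forall>\<omega>\<in>space (Q n). dist (T n \<omega>) (\<Phi> (V n \<omega>)) \<le> c n * (1 + norm (\<Phi> (V n \<omega>)))"
    and c: "c \<longlonglongrightarrow> 0" and cnn: "\<And>n. c n \<ge> 0"
  shows "conv_distr Q T UNIV R (\<lambda>r. \<Phi> (W r))"
  unfolding conv_distr_def
proof (intro allI impI)
  fix g :: "'b \<Rightarrow> real" assume g: "continuous_on UNIV g \<and> bounded (g ` UNIV)"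
  obtain B0 where B0: "\<forall>y\<in>g ` UNIV. norm y \<le> B0" using g unfolding bounded_iff by blast
  define B where "B = max B0 0"
  have B: "\<bar>g y\<bar> \<le> B" "B \<ge> 0" for y
  proof -
    have "norm (g y) \<le> B0" using B0 by simp
    then show "\<bar>g y\<bar> \<le> B" unfolding B_def by simp
    show "B \<ge> 0" unfolding B_def by simp
  qed
  have gm: "g \<in> borel_measurable borel" using g by (intro borel_measurable_continuous_onI) simp
  have mgT: "(\<lambda>\<omega>. g (T n \<omega>)) \<in> borel_measurable (Q n)" for n
    using measurable_compose[OF mT gm] .
  have mgV: "(\<lambda>\<omega>. g (\<Phi> (V n \<omega>))) \<in> borel_measurable (Q n)" for n
    using measurable_compose[OF mV gm] .
  have i1: "(\<lambda>n. \<integral>\<omega>. g (\<Phi> (V n \<omega>)) \<partial>Q n) \<longlonglongrightarrow> (\<integral>r. g (\<Phi> (W r)) \<partial>R)"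
  proof -
    have "continuous_on S (\<lambda>v. g (\<Phi> v))"
      using continuous_on_compose2[OF _ \<Phi>c, of UNIV g] g by auto
    moreover have "bounded ((\<lambda>v. g (\<Phi> v)) ` S)"
      using g by (rule_tac bounded_subset[of "g ` UNIV"]) auto
    ultimately show ?thesis using cd unfolding conv_distr_def by blast
  qed
  have i2: "(\<lambda>n. (\<integral>\<omega>. g (T n \<omega>) \<partial>Q n) - (\<integral>\<omega>. g (\<Phi> (V n \<omega>)) \<partial>Q n)) \<longlonglongrightarrow> 0"
    unfolding tendsto_iff
  proof (intro allI impI)
    fix \<epsilon> :: real assume \<epsilon>: "\<epsilon> > 0"
    define \<eta> where "\<eta> = \<epsilon> / (4 * (B + 1))"
    have \<eta>: "\<eta> > 0" unfolding \<eta>_def using \<epsilon> B(2) by simp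
    obtain M where M: "eventually (\<lambda>n. measure (Q n) {\<omega> \<in> space (Q n). M < \<bar>norm (\<Phi> (V n \<omega>))\<bar>} \<le> \<eta>) sequentially"
      using tight \<eta> by blast
    define Kc where "Kc = cball (0::'b) (\<bar>M\<bar> + 1)"
    have "uniformly_continuous_on Kc g"
      unfolding Kc_def by (rule compact_uniformly_continuous) (use g continuous_on_subset in auto)
    then obtain \<delta> where \<delta>: "\<delta> > 0" "\<And>x y. x \<in> Kc \<Longrightarrow> y \<in> Kc \<Longrightarrow> dist y x < \<delta> \<Longrightarrow> dist (g y) (g x) < \<epsilon> / 2"
      unfolding uniformly_continuous_on_def using \<epsilon> by (metis half_gt_zero)
    have "(\<lambda>n. c n * (1 + \<bar>M\<bar>)) \<longlonglongrightarrow> 0 * (1 + \<bar>M\<bar>)" by (intro tendsto_mult c tendsto_const)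
    then have "eventually (\<lambda>n. c n * (1 + \<bar>M\<bar>) < min \<delta> 1) sequentially" using \<delta>(1) by (intro order_tendstoD) auto
    moreover have "eventually (\<lambda>n. n \<ge> n0) sequentially" by (rule eventually_ge_at_top)
    ultimately show "eventually (\<lambda>n. dist ((\<integral>\<omega>. g (T n \<omega>) \<partial>Q n) - (\<integral>\<omega>. g (\<Phi> (V n \<omega>)) \<partial>Q n)) 0 < \<epsilon>) sequentially"
      using M
    proof eventually_elim
      case (elim n)
      interpret prob_space "Q n" by (rule Q)
      define A where "A = {\<omega> \<in> space (Q n). M < \<bar>norm (\<Phi> (V n \<omega>))\<bar>}"
      have As: "A \<in> sets (Q n)" unfolding A_def using mV[of n] by measurable
      have iT: "integrable (Q n) (\<lambda>\<omega>. g (T n \<omega>))"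
        by (rule integrable_const_bound[where B=B]) (use B mgT in auto)
      have iV: "integrable (Q n) (\<lambda>\<omega>. g (\<Phi> (V n \<omega>)))"
        by (rule integrable_const_bound[where B=B]) (use B mgV in auto)
      have iA: "integrable (Q n) (indicator A :: _ \<Rightarrow> real)"
        by (rule integrable_const_bound[where B=1]) (use As in auto)
      have pw: "\<bar>g (T n \<omega>) - g (\<Phi> (V n \<omega>))\<bar> \<le> \<epsilon> / 2 + 2 * B * indicator A \<omega>" if \<omega>: "\<omega> \<in> space (Q n)" for \<omega>
      proof (cases "\<omega> \<in> A")
        case True
        have "\<bar>g (T n \<omega>) - g (\<Phi> (V n \<omega>))\<bar> \<le> 2 * B"
          using B(1)[of "T n \<omega>"] B(1)[of "\<Phi> (V n \<omega>)"] by linarith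
        then show ?thesis using True \<epsilon> by simp
      next
        case False
        then have nM: "norm (\<Phi> (V n \<omega>)) \<le> \<bar>M\<bar>" using \<omega> unfolding A_def by auto
        have "c n * (1 + norm (\<Phi> (V n \<omega>))) \<le> c n * (1 + \<bar>M\<bar>)"
          using nM cnn by (intro mult_left_mono) auto
        then have d: "dist (T n \<omega>) (\<Phi> (V n \<omega>)) < min \<delta> 1" using b elim \<omega> by force
        have k1: "\<Phi> (V n \<omega>) \<in> Kc" unfolding Kc_def using nM by simp
        have "norm (T n \<omega>) \<le> norm (\<Phi> (V n \<omega>)) + dist (T n \<omega>) (\<Phi> (V n \<omega>))"
          by (metis dist_norm norm_triangle_sub add.commute)
        then have k2: "T n \<omega> \<in> Kc" unfolding Kc_def using nM d by simp
        have "dist (g (T n \<omega>)) (g (\<Phi> (V n \<omega>))) < \<epsilon> / 2" using \<delta>(2)[OF k1 k2] d by simp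
        then show ?thesis using False B(2) by (simp add: dist_real_def)
      qed
      have "\<bar>(\<integral>\<omega>. g (T n \<omega>) \<partial>Q n) - (\<integral>\<omega>. g (\<Phi> (V n \<omega>)) \<partial>Q n)\<bar>
          = \<bar>\<integral>\<omega>. g (T n \<omega>) - g (\<Phi> (V n \<omega>)) \<partial>Q n\<bar>" using iT iV by simp
      also have "\<dots> \<le> (\<integral>\<omega>. \<bar>g (T n \<omega>) - g (\<Phi> (V n \<omega>))\<bar> \<partial>Q n)" by (rule integral_abs_bound)
      also have "\<dots> \<le> (\<integral>\<omega>. \<epsilon> / 2 + 2 * B * indicator A \<omega> \<partial>Q n)"
      proof (rule integral_mono')
        show "integrable (Q n) (\<lambda>\<omega>. \<epsilon> / 2 + 2 * B * indicator A \<omega>)" using iA by simp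
        show "\<bar>g (T n \<omega>) - g (\<Phi> (V n \<omega>))\<bar> \<le> \<epsilon> / 2 + 2 * B * indicator A \<omega>" if "\<omega> \<in> space (Q n)" for \<omega>
          by (rule pw[OF that])
        show "0 \<le> \<epsilon> / 2 + 2 * B * indicator A \<omega>" for \<omega> using \<epsilon> B(2) by simp
      qed
      also have "\<dots> = \<epsilon> / 2 + 2 * B * measure (Q n) A"
        using iA As by (simp add: prob_space Int_absorb2 sets.sets_into_space)
      also have "\<dots> \<le> \<epsilon> / 2 + 2 * B * \<eta>"
        using elim B(2) unfolding A_def by (intro add_left_mono mult_left_mono) auto
      also have "\<dots> < \<epsilon>"
      proof -
        have "2 * B * \<eta> = \<epsilon> * (2 * B / (4 * (B + 1)))" unfolding \<eta>_def by simp
        also have "\<dots> < \<epsilon> * (1 / 2)" using \<epsilon> B(2) by (intro mult_strict_left_mono) (auto simp: field_simps)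
        finally show ?thesis by simp
      qed
      finally show ?case by (simp add: dist_real_def)
    qed
  qed
  show "(\<lambda>n. \<integral>\<omega>. g (T n \<omega>) \<partial>Q n) \<longlonglongrightarrow> (\<integral>r. g (\<Phi> (W r)) \<partial>R)"
    using tendsto_add[OF i2 i1] by simp
qed



context Tctx begin

lemma eps_X: "\<omega> \<in> space (Q n) \<Longrightarrow> \<forall>i\<in>{1..n}. eps n \<omega> i \<in> X"
  using measurable_space[OF eps_meas] by (auto simp: space_restrict_space)

lemma win_meas_Q:
  assumes "1 \<le> a" "a + m \<le> n + 1"
  shows "(\<lambda>\<omega>. win (eps n \<omega>) a m) \<in> measurable (Q n) (PX m)"
  unfolding win_def PX_def
  by (rule measurable_restrict) (rule eps_meas, use assms in auto)

lemma Gs_meas: "1 \<le> t \<Longrightarrow> t + msum \<le> n + 1 \<Longrightarrow> (\<lambda>\<omega>. Gs (eps n \<omega>) t) \<in> borel_measurable (Q n)"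
  unfolding Gs_def
  by (intro borel_measurable_diff measurable_compose[OF win_meas_Q fsm_meas[folded PX_def]] borel_measurable_const)

lemma Gl_meas: "1 \<le> t \<Longrightarrow> t + mlb \<le> n + 1 \<Longrightarrow> (\<lambda>\<omega>. Gl (eps n \<omega>) t) \<in> borel_measurable (Q n)"
  unfolding Gl_def
  by (intro borel_measurable_diff measurable_compose[OF win_meas_Q flb_meas[folded PX_def]] borel_measurable_const)

lemma ind_meas_Q:
  assumes "j \<le> K" "1 \<le> a" "a + Lsb \<le> n + 1"
  shows "(\<lambda>\<omega>. if fsb (win (eps n \<omega>) a Lsb) \<in> \<alpha> j then 1 else (0::real)) \<in> borel_measurable (Q n)"
proof -
  have "(\<lambda>\<omega>. indicator (\<alpha> j) (fsb (win (eps n \<omega>) a Lsb)) :: real) \<in> borel_measurable (Q n)"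
    using measurable_compose[OF win_meas_Q[OF assms(2,3)] ind_meas[OF assms(1)]] .
  moreover have "(\<lambda>\<omega>. indicator (\<alpha> j) (fsb (win (eps n \<omega>) a Lsb)) :: real)
     = (\<lambda>\<omega>. if fsb (win (eps n \<omega>) a Lsb) \<in> \<alpha> j then 1 else (0::real))"
    by (auto simp: indicator_def)
  ultimately show ?thesis by simp
qed

lemma Gb_meas: "j \<le> K \<Longrightarrow> 1 \<le> t \<Longrightarrow> Lsb * t \<le> n \<Longrightarrow> (\<lambda>\<omega>. Gb (eps n \<omega>) j t) \<in> borel_measurable (Q n)"
proof -
  assume a: "j \<le> K" "1 \<le> t" "Lsb * t \<le> n"
  have "Lsb * (t - 1) + 1 + Lsb = Lsb * t + 1" using a(2) by (cases t) (auto simp: algebra_simps)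
  then show ?thesis unfolding Gb_def
    by (intro borel_measurable_diff ind_meas_Q[OF a(1)] borel_measurable_const) (use a in auto)
qed

lemma Aset_range:
  assumes "k \<in> {1..N}" "t \<in> Aset (n div N) h s hh k" "h = p * hh" "p \<ge> 1"
  shows "1 \<le> t \<and> p * t + s \<le> n + h"
proof -
  have b: "(n div N) * (k - 1) < p * t \<and> p * t + s \<le> (n div N) * k + h"
    by (rule Aset_bounds[OF assms(3,2,4)])
  have "(n div N) * k \<le> (n div N) * N" using assms(1) by (intro mult_le_mono2) auto
  moreover have "(n div N) * N \<le> n" by (simp add: mult.commute)
  ultimately have "p * t + s \<le> n + h" using b by linarith
  moreover have "t \<ge> 1" using b by (cases t) auto
  ultimately show ?thesis by simp
qed

lemma Xcal_meas:
  assumes k: "k \<in> {1..N}" and j: "j \<le> K + 2"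
  shows "(\<lambda>\<omega>. Xcal P0 msum fsm mlb flb Lsb K fsb \<alpha> N s h n (eps n \<omega>) k j) \<in> borel_measurable (Q n)"
proof -
  have sm: "h + msum \<le> s + 1" "h + mlb \<le> s + 1" using Nsh(4) by (simp_all add: max_def split: if_splits)
  consider "j \<le> K" | "j = K + 1" | "j = K + 2" using j by linarith
  then show ?thesis
  proof cases
    case 1
    show ?thesis unfolding Xcal_j[OF 1]
    proof (intro borel_measurable_divide borel_measurable_sum borel_measurable_const)
      fix t assume t: "t \<in> Aset (n div N) h s hb k"
      have r: "1 \<le> t \<and> Lsb * t + s \<le> n + h" by (rule Aset_range[OF k t h_hb pos(4)])
      show "(\<lambda>\<omega>. Gb (eps n \<omega>) j t) \<in> borel_measurable (Q n)"
        by (rule Gb_meas[OF 1]) (use r h_le_s in auto)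
    qed
  next
    case 2
    show ?thesis unfolding 2 Xcal_K1
    proof (intro borel_measurable_divide borel_measurable_sum borel_measurable_const)
      fix t assume t: "t \<in> Aset (n div N) h s h k"
      have r: "1 \<le> t \<and> 1 * t + s \<le> n + h" by (rule Aset_range[OF k t]) auto
      show "(\<lambda>\<omega>. Gl (eps n \<omega>) t) \<in> borel_measurable (Q n)"
        by (rule Gl_meas) (use r sm in auto)
    qed
  next
    case 3
    show ?thesis unfolding 3 Xcal_K2
    proof (intro borel_measurable_divide borel_measurable_sum borel_measurable_const)
      fix t assume t: "t \<in> Aset (n div N) h s h k"
      have r: "1 \<le> t \<and> 1 * t + s \<le> n + h" by (rule Aset_range[OF k t]) auto
      show "(\<lambda>\<omega>. Gs (eps n \<omega>) t) \<in> borel_measurable (Q n)"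
        by (rule Gs_meas) (use r sm in auto)
    qed
  qed
qed

lemma Ycal_meas:
  assumes k: "k \<in> {1..Nlb}" and j: "j \<le> K + 2"
  shows "(\<lambda>\<omega>. Ycal P0 msum fsm mlb flb Nlb Lsb K fsb \<alpha> N s h n (eps n \<omega>) k j) \<in> borel_measurable (Q n)"
proof -
  have k1: "k \<ge> 1" using k by simp
  show ?thesis unfolding Ycal_blk[OF k1]
  proof (intro borel_measurable_sum Xcal_meas j)
    fix k' assume "k' \<in> {q * (k - 1) + 1..q * k}"
    moreover have "q * k \<le> q * Nlb" using k by simp
    ultimately show "k' \<in> {1..N}" using Nq by auto
  qed
qed


lemma Tsum_meas: "(\<lambda>\<omega>. Tsum P0 msum fsm n (eps n \<omega>)) \<in> borel_measurable (Q n)"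
  unfolding Tsum_def
proof (intro borel_measurable_divide borel_measurable_sum borel_measurable_const borel_measurable_diff)
  fix i assume i: "i \<in> {1..n + 1 - msum}"
  show "(\<lambda>\<omega>. fsm (win (eps n \<omega>) i msum)) \<in> borel_measurable (Q n)"
    by (rule measurable_compose[OF win_meas_Q fsm_meas[folded PX_def]]) (use i in auto)
qed

lemma Tlb_meas: "(\<lambda>\<omega>. Tlb P0 Nlb mlb flb n (eps n \<omega>)) \<in> borel_measurable (Q n)"
  unfolding Tlb_def Let_def Wlb_def
proof (intro borel_measurable_divide borel_measurable_sum borel_measurable_const borel_measurable_diff
    borel_measurable_power)
  fix k j assume k: "k \<in> {1..Nlb}" and j: "j \<in> {n div Nlb * (k - 1) + 1..n div Nlb * k + 1 - mlb}"
  have "n div Nlb * k \<le> n div Nlb * Nlb" using k by (intro mult_le_mono2) auto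
  moreover have "n div Nlb * Nlb \<le> n" by simp
  ultimately have c: "n div Nlb * k \<le> n" by linarith
  have "1 \<le> j" "j \<le> n div Nlb * k + 1 - mlb" using j by auto
  then have "j + mlb \<le> n + 1" using c by arith
  then show "(\<lambda>\<omega>. flb (win (eps n \<omega>) j mlb)) \<in> borel_measurable (Q n)"
    by (intro measurable_compose[OF win_meas_Q flb_meas[folded PX_def]]) (use j in auto)
qed

lemma Tsb_meas: "(\<lambda>\<omega>. Tsb P0 Lsb K fsb \<alpha> n (eps n \<omega>)) \<in> borel_measurable (Q n)"
  unfolding Tsb_def Let_def wsb_def
proof (intro borel_measurable_divide borel_measurable_sum borel_measurable_const borel_measurable_diff
    borel_measurable_power borel_measurable_times)
  fix j i assume j: "j \<in> {0..K}" and i: "i \<in> {1..n div Lsb}"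
  have "Lsb * i \<le> Lsb * (n div Lsb)" using i by simp
  moreover have "Lsb * (n div Lsb) \<le> n" by simp
  ultimately have c: "Lsb * i \<le> n" by linarith
  have "Lsb * (i - 1) + 1 + Lsb = Lsb * i + 1" using i by (cases i) (auto simp: algebra_simps)
  then show "(\<lambda>\<omega>. if fsb (win (eps n \<omega>) (Lsb * (i - 1) + 1) Lsb) \<in> \<alpha> j then 1 else (0::real)) \<in> borel_measurable (Q n)"
    by (intro ind_meas_Q) (use j c in auto)
qed

definition "NS = {1..N} \<times> {0..K + 2}"
definition "YS = {1..Nlb} \<times> {0..K + 2}"
definition "Phi v = ((\<Sum>k=1..Nlb. \<Sum>i=1..q. v (q * (k - 1) + i, K + 2)),
   real Nlb * (\<Sum>k=1..Nlb. (\<Sum>i=1..q. v (q * (k - 1) + i, K + 1))\<^sup>2),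
   real Lsb * (\<Sum>j=0..K. (\<Sum>k=1..Nlb. \<Sum>i=1..q. v (q * (k - 1) + i, j))\<^sup>2))"
definition "Psi v = vec_on YS (\<lambda>(k, j). \<Sum>i=1..q. v (q * (k - 1) + i, j))"

lemma idx: "k \<in> {1..Nlb} \<Longrightarrow> i \<in> {1..q} \<Longrightarrow> q * (k - 1) + i \<in> {1..N}"
proof -
  assume k: "k \<in> {1..Nlb}" and i: "i \<in> {1..q}"
  have "q * (k - 1) + i \<le> q * (k - 1) + q" using i by simp
  also have "\<dots> = q * k" using k by (cases k) (auto simp: algebra_simps)
  also have "\<dots> \<le> q * Nlb" using k by simp
  finally show ?thesis using Nq i by simp
qed

lemma vec_on_idx: "k \<in> {1..Nlb} \<Longrightarrow> i \<in> {1..q} \<Longrightarrow> j \<le> K + 2 \<Longrightarrow>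
   vec_on NS (\<lambda>(k, j). F k j) (q * (k - 1) + i, j) = F (q * (k - 1) + i) j"
proof -
  assume a: "k \<in> {1..Nlb}" "i \<in> {1..q}" "j \<le> K + 2"
  have "(q * (k - 1) + i, j) \<in> NS" unfolding NS_def using idx[OF a(1,2)] a(3) by simp
  then show ?thesis unfolding vec_on_def by simp
qed

lemma sum_vec: "k \<in> {1..Nlb} \<Longrightarrow> j \<le> K + 2 \<Longrightarrow>
   (\<Sum>i=1..q. vec_on NS (\<lambda>(k, j). F k j) (q * (k - 1) + i, j)) = (\<Sum>i=1..q. F (q * (k - 1) + i) j)"
proof -
  assume k: "k \<in> {1..Nlb}" and j: "j \<le> K + 2"
  show ?thesis
  proof (rule sum.cong[OF refl])
    fix i assume i: "i \<in> {1..q}"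
    show "vec_on NS (\<lambda>(k, j). F k j) (q * (k - 1) + i, j) = F (q * (k - 1) + i) j"
      by (rule vec_on_idx[OF k i j])
  qed
qed

lemma Phi_vec: "Phi (vec_on NS (\<lambda>(k, j). F k j)) =
  ((\<Sum>k=1..Nlb. \<Sum>i=1..q. F (q * (k - 1) + i) (K + 2)),
   real Nlb * (\<Sum>k=1..Nlb. (\<Sum>i=1..q. F (q * (k - 1) + i) (K + 1))\<^sup>2),
   real Lsb * (\<Sum>j=0..K. (\<Sum>k=1..Nlb. \<Sum>i=1..q. F (q * (k - 1) + i) j)\<^sup>2))"
proof -
  let ?v = "vec_on NS (\<lambda>(k, j). F k j)"
  have c1: "(\<Sum>k=1..Nlb. \<Sum>i=1..q. ?v (q * (k - 1) + i, j)) = (\<Sum>k=1..Nlb. \<Sum>i=1..q. F (q * (k - 1) + i) j)"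
    if "j \<le> K + 2" for j
    by (rule sum.cong[OF refl], rule sum_vec) (use that in auto)
  have c2: "(\<Sum>k=1..Nlb. (\<Sum>i=1..q. ?v (q * (k - 1) + i, K + 1))\<^sup>2) = (\<Sum>k=1..Nlb. (\<Sum>i=1..q. F (q * (k - 1) + i) (K + 1))\<^sup>2)"
    by (rule sum.cong[OF refl]) (subst sum_vec, auto)
  have c3: "(\<Sum>j=0..K. (\<Sum>k=1..Nlb. \<Sum>i=1..q. ?v (q * (k - 1) + i, j))\<^sup>2) = (\<Sum>j=0..K. (\<Sum>k=1..Nlb. \<Sum>i=1..q. F (q * (k - 1) + i) j)\<^sup>2)"
    by (rule sum.cong[OF refl]) (subst c1, auto)
  show ?thesis unfolding Phi_def c2 c3 c1[of "K + 2", OF order_refl] by (rule refl)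
qed

lemma Psi_vec: "Psi (vec_on NS (\<lambda>(k, j). F k j)) = vec_on YS (\<lambda>(k, j). \<Sum>i=1..q. F (q * (k - 1) + i) j)"
proof -
  have "vec_on YS (\<lambda>(k, j). \<Sum>i=1..q. vec_on NS (\<lambda>(k, j). F k j) (q * (k - 1) + i, j)) z
      = vec_on YS (\<lambda>(k, j). \<Sum>i=1..q. F (q * (k - 1) + i) j) z" for z
  proof -
    obtain k j where z: "z = (k, j)" by force
    show ?thesis
    proof (cases "z \<in> YS")
      case True
      then have kj: "k \<in> {1..Nlb}" "j \<le> K + 2" unfolding z YS_def by auto
      show ?thesis unfolding vec_on_def[of YS] z using True[unfolded z] sum_vec[OF kj, of F] by simp
    next
      case False
      then show ?thesis unfolding vec_on_def by simp
    qed
  qed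
  then show ?thesis unfolding Psi_def by (simp add: fun_eq_iff)
qed

lemma Phi_cont: "continuous_on A Phi"
  unfolding Phi_def
  by (intro continuous_intros continuous_on_subset[OF continuous_on_product_coordinates]) auto

lemma Psi_cont: "continuous_on A Psi"
proof (unfold Psi_def, rule continuous_on_coordinatewise_then_product)
  fix z :: "nat \<times> nat"
  obtain k j where z: "z = (k, j)" by force
  show "continuous_on A (\<lambda>v. vec_on YS (\<lambda>(k, j). \<Sum>i=1..q. v (q * (k - 1) + i, j)) z)"
    unfolding vec_on_def z
    by (cases "(k, j) \<in> YS") (auto intro!: continuous_intros continuous_on_subset[OF continuous_on_product_coordinates])
qed

lemma Psi_im: "Psi ` A \<subseteq> supp_on YS"
  unfolding Psi_def vec_on_def supp_on_def by auto

end



lemma C_sqrt_0: "(\<lambda>n. C / sqrt (real n)) \<longlonglongrightarrow> 0"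
  by (rule real_tendsto_divide_at_top[OF tendsto_const])
     (rule filterlim_compose[OF sqrt_at_top filterlim_real_sequentially])

lemma dist_triple: "dist ((a::real), (b::real), (c::real)) (a', b', c') \<le> \<bar>a - a'\<bar> + \<bar>b - b'\<bar> + \<bar>c - c'\<bar>"
proof -
  have "dist (b, c) (b', c') \<le> \<bar>b - b'\<bar> + \<bar>c - c'\<bar>"
    unfolding dist_Pair_Pair using sqrt_sum_squares_le_sum_abs[of "dist b b'" "dist c c'"] by (simp add: dist_real_def)
  moreover have "dist (a, b, c) (a', b', c') \<le> \<bar>a - a'\<bar> + dist (b, c) (b', c')"
    unfolding dist_Pair_Pair[of a "(b, c)"] using sqrt_sum_squares_le_sum_abs[of "dist a a'" "dist (b, c) (b', c')"]
    by (simp add: dist_real_def)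
  ultimately show ?thesis by linarith
qed

context Tctx begin

definition "Xv n \<omega> = vec_on NS (\<lambda>(k, j). Xcal P0 msum fsm mlb flb Lsb K fsb \<alpha> N s h n (eps n \<omega>) k j)"

lemma Phi_X: "Phi (Xv n \<omega>) =
  ((\<Sum>k=1..Nlb. Ycal P0 msum fsm mlb flb Nlb Lsb K fsb \<alpha> N s h n (eps n \<omega>) k (K + 2)),
   real Nlb * (\<Sum>k=1..Nlb. (Ycal P0 msum fsm mlb flb Nlb Lsb K fsb \<alpha> N s h n (eps n \<omega>) k (K + 1))\<^sup>2),
   real Lsb * (\<Sum>j=0..K. (\<Sum>k=1..Nlb. Ycal P0 msum fsm mlb flb Nlb Lsb K fsb \<alpha> N s h n (eps n \<omega>) k j)\<^sup>2))"
  unfolding Xv_def Phi_vec Ycal_def q_def by (rule refl)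

lemma Psi_X: "Psi (Xv n \<omega>) = vec_on YS (\<lambda>(k, j). Ycal P0 msum fsm mlb flb Nlb Lsb K fsb \<alpha> N s h n (eps n \<omega>) k j)"
  unfolding Xv_def Psi_vec Ycal_def q_def by (rule refl)

lemma PhiX_meas: "(\<lambda>\<omega>. Phi (Xv n \<omega>)) \<in> borel_measurable (Q n)"
  unfolding Phi_X
  by (intro borel_measurable_Pair borel_measurable_sum borel_measurable_times borel_measurable_power
      borel_measurable_const Ycal_meas) auto

definition "Call = \<bar>Cs\<bar> + Clb * real Nlb + Csbt"

lemma Clb_nn: "Clb \<ge> 0"
proof -
  have "Dlb \<ge> 0" unfolding Dlb_def using Bl_nn \<sigma>l_pos by simp
  then show ?thesis unfolding Clb_def by simp
qed

lemma Csbt_nn: "Csbt \<ge> 0" unfolding Csbt_def using Csb_nn by (intro sum_nonneg) auto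

lemma bounds:
  assumes n: "n \<ge> n0" and \<omega>: "\<omega> \<in> space (Q n)"
  shows "\<bar>Tsum P0 msum fsm n (eps n \<omega>) - fst (Phi (Xv n \<omega>))\<bar> \<le> \<bar>Cs\<bar> / sqrt (real n) * (1 + norm (Phi (Xv n \<omega>)))"
    "\<bar>Tlb P0 Nlb mlb flb n (eps n \<omega>) - fst (snd (Phi (Xv n \<omega>)))\<bar> \<le> Clb * real Nlb / sqrt (real n) * (1 + norm (Phi (Xv n \<omega>)))"
    "\<bar>Tsb P0 Lsb K fsb \<alpha> n (eps n \<omega>) - snd (snd (Phi (Xv n \<omega>)))\<bar> \<le> Csbt / sqrt (real n) * (1 + norm (Phi (Xv n \<omega>)))"
proof -
  note x = eps_X[OF \<omega>]
  define P where "P = Phi (Xv n \<omega>)"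
  have sn: "sqrt (real n) > 0" using n unfolding n0_def using Nsh(1) by (simp add: add_pos_pos)
  have nP: "norm P \<ge> 0" by simp
  obtain a b c where Pabc: "P = (a, b, c)" by (cases P) auto
  have p2: "\<bar>fst (snd P)\<bar> \<le> norm P"
    using norm_fst_le[of b c] norm_snd_le[of "(b, c)" a] unfolding Pabc by simp
  have p3: "\<bar>snd (snd P)\<bar> \<le> norm P"
    using norm_snd_le[of c b] norm_snd_le[of "(b, c)" a] unfolding Pabc by simp
  have "\<bar>Tsum P0 msum fsm n (eps n \<omega>) - fst P\<bar> \<le> Cs / sqrt (real n)"
    unfolding P_def Phi_X using Tsum_approx[OF n x] by simp
  also have "\<dots> \<le> \<bar>Cs\<bar> / sqrt (real n) * (1 + norm P)"
  proof -
    have "Cs / sqrt (real n) \<le> \<bar>Cs\<bar> / sqrt (real n)" using sn by (intro divide_right_mono) auto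
    also have "\<dots> = \<bar>Cs\<bar> / sqrt (real n) * 1" by simp
    also have "\<dots> \<le> \<bar>Cs\<bar> / sqrt (real n) * (1 + norm P)" using sn nP by (intro mult_left_mono) auto
    finally show ?thesis .
  qed
  finally show "\<bar>Tsum P0 msum fsm n (eps n \<omega>) - fst (Phi (Xv n \<omega>))\<bar> \<le> \<bar>Cs\<bar> / sqrt (real n) * (1 + norm (Phi (Xv n \<omega>)))"
    unfolding P_def .
  let ?S2 = "\<Sum>k=1..Nlb. (Ycal P0 msum fsm mlb flb Nlb Lsb K fsb \<alpha> N s h n (eps n \<omega>) k (K + 1))\<^sup>2"
  have S2: "0 \<le> ?S2" "?S2 \<le> norm P"
  proof -
    show "0 \<le> ?S2" by (intro sum_nonneg) auto
    then have "?S2 \<le> real Nlb * ?S2" using pos(3) by (simp add: mult_le_cancel_right1)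
    also have "\<dots> = fst (snd P)" unfolding P_def Phi_X by simp
    finally show "?S2 \<le> norm P" using p2 by linarith
  qed
  have "\<bar>Tlb P0 Nlb mlb flb n (eps n \<omega>) - fst (snd P)\<bar> \<le> Clb * (real Nlb + ?S2) / sqrt (real n)"
    unfolding P_def Phi_X using Tlb_approx[OF n x] by simp
  also have "\<dots> \<le> Clb * real Nlb / sqrt (real n) * (1 + norm P)"
  proof -
    have "1 * norm P \<le> real Nlb * norm P" using pos(3) nP by (intro mult_right_mono) auto
    then have "real Nlb + ?S2 \<le> real Nlb * (1 + norm P)" using S2 by (simp add: algebra_simps)
    then have "Clb * (real Nlb + ?S2) \<le> Clb * (real Nlb * (1 + norm P))" using Clb_nn by (intro mult_left_mono)
    then show ?thesis using sn by (simp add: divide_right_mono mult.assoc)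
  qed
  finally show "\<bar>Tlb P0 Nlb mlb flb n (eps n \<omega>) - fst (snd (Phi (Xv n \<omega>)))\<bar> \<le> Clb * real Nlb / sqrt (real n) * (1 + norm (Phi (Xv n \<omega>)))"
    unfolding P_def .
  let ?S3 = "\<Sum>j=0..K. (\<Sum>k=1..Nlb. Ycal P0 msum fsm mlb flb Nlb Lsb K fsb \<alpha> N s h n (eps n \<omega>) k j)\<^sup>2"
  have S3: "0 \<le> ?S3" "?S3 \<le> norm P"
  proof -
    show "0 \<le> ?S3" by (intro sum_nonneg) auto
    then have "?S3 \<le> real Lsb * ?S3" using pos(4) by (simp add: mult_le_cancel_right1)
    also have "\<dots> = snd (snd P)" unfolding P_def Phi_X by simp
    finally show "?S3 \<le> norm P" using p3 by linarith
  qed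
  have "\<bar>Tsb P0 Lsb K fsb \<alpha> n (eps n \<omega>) - snd (snd P)\<bar> \<le> Csbt * (1 + ?S3) / sqrt (real n)"
    unfolding P_def Phi_X using Tsb_approx[OF n] by simp
  also have "\<dots> \<le> Csbt / sqrt (real n) * (1 + norm P)"
  proof -
    have "Csbt * (1 + ?S3) \<le> Csbt * (1 + norm P)" using S3 Csbt_nn by (intro mult_left_mono) auto
    then show ?thesis using sn by (simp add: divide_right_mono)
  qed
  finally show "\<bar>Tsb P0 Lsb K fsb \<alpha> n (eps n \<omega>) - snd (snd (Phi (Xv n \<omega>)))\<bar> \<le> Csbt / sqrt (real n) * (1 + norm (Phi (Xv n \<omega>)))"
    unfolding P_def .
qed


lemma main:
  shows
   "oP1 Q (\<lambda>n \<omega>. Tsum P0 msum fsm n (eps n \<omega>)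
             - (\<Sum>k=1..Nlb. Ycal P0 msum fsm mlb flb Nlb Lsb K fsb \<alpha> N s h n (eps n \<omega>) k (K + 2)))
    \<and>
    (\<forall>(R :: 'r measure) (\<eta> :: 'r \<Rightarrow> nat \<Rightarrow> nat \<Rightarrow> real).
      prob_space R
      \<and> (\<forall>k j. (\<lambda>r. \<eta> r k j) \<in> borel_measurable R)
      \<and> conv_distr Q
          (\<lambda>n \<omega>. vec_on ({1..N} \<times> {0..K + 2})
                   (\<lambda>(k, j). Xcal P0 msum fsm mlb flb Lsb K fsb \<alpha> N s h n (eps n \<omega>) k j))
          (supp_on ({1..N} \<times> {0..K + 2}))
          R (\<lambda>r. vec_on ({1..N} \<times> {0..K + 2}) (\<lambda>(k, j). \<eta> r k j))
      \<longrightarrow>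
      (let \<zeta> = (\<lambda>r k j. \<Sum>i=1..N div Nlb. \<eta> r ((N div Nlb) * (k - 1) + i) j) in
        oP1 Q (\<lambda>n \<omega>. Tlb P0 Nlb mlb flb n (eps n \<omega>)
             - real Nlb * (\<Sum>k=1..Nlb. (Ycal P0 msum fsm mlb flb Nlb Lsb K fsb \<alpha> N s h n (eps n \<omega>) k (K + 1))\<^sup>2))
      \<and> oP1 Q (\<lambda>n \<omega>. Tsb P0 Lsb K fsb \<alpha> n (eps n \<omega>)
             - real Lsb * (\<Sum>j=0..K. (\<Sum>k=1..Nlb. Ycal P0 msum fsm mlb flb Nlb Lsb K fsb \<alpha> N s h n (eps n \<omega>) k j)\<^sup>2))
      \<and> conv_distr Q
          (\<lambda>n \<omega>. vec_on ({1..Nlb} \<times> {0..K + 2})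
                   (\<lambda>(k, j). Ycal P0 msum fsm mlb flb Nlb Lsb K fsb \<alpha> N s h n (eps n \<omega>) k j))
          (supp_on ({1..Nlb} \<times> {0..K + 2}))
          R (\<lambda>r. vec_on ({1..Nlb} \<times> {0..K + 2}) (\<lambda>(k, j). \<zeta> r k j))
      \<and> conv_distr Q
          (\<lambda>n \<omega>. (Tsum P0 msum fsm n (eps n \<omega>), Tlb P0 Nlb mlb flb n (eps n \<omega>), Tsb P0 Lsb K fsb \<alpha> n (eps n \<omega>)))
          UNIV
          R (\<lambda>r. ((\<Sum>k=1..Nlb. \<zeta> r k (K + 2)),
                  real Nlb * (\<Sum>k=1..Nlb. (\<zeta> r k (K + 1))\<^sup>2),
                  real Lsb * (\<Sum>j=0..K. (\<Sum>k=1..Nlb. \<zeta> r k j)\<^sup>2)))))"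
proof (intro conjI allI impI)
  show "oP1 Q (\<lambda>n \<omega>. Tsum P0 msum fsm n (eps n \<omega>)
             - (\<Sum>k=1..Nlb. Ycal P0 msum fsm mlb flb Nlb Lsb K fsb \<alpha> N s h n (eps n \<omega>) k (K + 2)))"
  proof (rule oP1_det[of n0 Q _ "\<lambda>n. \<bar>Cs\<bar> / sqrt (real n)"])
    show "(\<lambda>n. \<bar>Cs\<bar> / sqrt (real n)) \<longlonglongrightarrow> 0" by (rule C_sqrt_0)
    show "\<forall>n\<ge>n0. \<forall>\<omega>\<in>space (Q n). \<bar>Tsum P0 msum fsm n (eps n \<omega>)
             - (\<Sum>k=1..Nlb. Ycal P0 msum fsm mlb flb Nlb Lsb K fsb \<alpha> N s h n (eps n \<omega>) k (K + 2))\<bar> \<le> \<bar>Cs\<bar> / sqrt (real n)"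
    proof (intro allI impI ballI)
      fix n \<omega> assume n: "n \<ge> n0" and \<omega>: "\<omega> \<in> space (Q n)"
      have "Cs / sqrt (real n) \<le> \<bar>Cs\<bar> / sqrt (real n)" by (intro divide_right_mono) auto
      then show "\<bar>Tsum P0 msum fsm n (eps n \<omega>)
             - (\<Sum>k=1..Nlb. Ycal P0 msum fsm mlb flb Nlb Lsb K fsb \<alpha> N s h n (eps n \<omega>) k (K + 2))\<bar> \<le> \<bar>Cs\<bar> / sqrt (real n)"
        using Tsum_approx[OF n eps_X[OF \<omega>]] by linarith
    qed
  qed
next
  fix R :: "'r measure" and \<eta> :: "'r \<Rightarrow> nat \<Rightarrow> nat \<Rightarrow> real"
  assume H: "prob_space R
      \<and> (\<forall>k j. (\<lambda>r. \<eta> r k j) \<in> borel_measurable R)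
      \<and> conv_distr Q
          (\<lambda>n \<omega>. vec_on ({1..N} \<times> {0..K + 2})
                   (\<lambda>(k, j). Xcal P0 msum fsm mlb flb Lsb K fsb \<alpha> N s h n (eps n \<omega>) k j))
          (supp_on ({1..N} \<times> {0..K + 2}))
          R (\<lambda>r. vec_on ({1..N} \<times> {0..K + 2}) (\<lambda>(k, j). \<eta> r k j))"
  define W where "W r = vec_on NS (\<lambda>(k, j). \<eta> r k j)" for r
  have R: "prob_space R" and \<eta>m: "\<And>k j. (\<lambda>r. \<eta> r k j) \<in> borel_measurable R" using H by auto
  have eX: "(\<lambda>n \<omega>. vec_on ({1..N} \<times> {0..K + 2})
                   (\<lambda>(k, j). Xcal P0 msum fsm mlb flb Lsb K fsb \<alpha> N s h n (eps n \<omega>) k j)) = Xv"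
    by (intro ext) (simp add: Xv_def NS_def)
  have eW: "(\<lambda>r. vec_on ({1..N} \<times> {0..K + 2}) (\<lambda>(k, j). \<eta> r k j)) = W"
    by (intro ext) (simp add: W_def NS_def)
  have cd: "conv_distr Q Xv (supp_on NS) R W" using H unfolding eX eW NS_def by blast
  have PhiW: "Phi (W r) = ((\<Sum>k=1..Nlb. \<Sum>i=1..q. \<eta> r (q * (k - 1) + i) (K + 2)),
   real Nlb * (\<Sum>k=1..Nlb. (\<Sum>i=1..q. \<eta> r (q * (k - 1) + i) (K + 1))\<^sup>2),
   real Lsb * (\<Sum>j=0..K. (\<Sum>k=1..Nlb. \<Sum>i=1..q. \<eta> r (q * (k - 1) + i) j)\<^sup>2))" for r
    unfolding W_def Phi_vec by (rule refl)
  have PhiW_meas: "(\<lambda>r. Phi (W r)) \<in> borel_measurable R"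
    unfolding PhiW
    by (intro borel_measurable_Pair borel_measurable_sum borel_measurable_times borel_measurable_power
      borel_measurable_const \<eta>m)
  have tight: "\<forall>\<epsilon>>0. \<exists>M. eventually (\<lambda>n. measure (Q n) {\<omega> \<in> space (Q n). M < \<bar>norm (Phi (Xv n \<omega>))\<bar>} \<le> \<epsilon>) sequentially"
  proof (rule tight_of_conv[OF Q R cd])
    show "continuous_on (supp_on NS) (\<lambda>v. norm (Phi v))" by (intro continuous_on_norm Phi_cont)
    show "(\<lambda>\<omega>. norm (Phi (Xv n \<omega>))) \<in> borel_measurable (Q n)" for n
      using measurable_compose[OF PhiX_meas borel_measurable_norm] .
    show "(\<lambda>r. norm (Phi (W r))) \<in> borel_measurable R"
      using measurable_compose[OF PhiW_meas borel_measurable_norm] .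
  qed
  have tight': "\<forall>\<epsilon>>0. \<exists>M. eventually (\<lambda>n. measure (Q n) {\<omega> \<in> space (Q n). M < \<bar>norm (Phi (Xv n \<omega>))\<bar>} \<le> \<epsilon>) sequentially"
    by (rule tight)
  have Um: "(\<lambda>\<omega>. norm (Phi (Xv n \<omega>))) \<in> borel_measurable (Q n)" for n
    using measurable_compose[OF PhiX_meas borel_measurable_norm] .
  have sqnn: "sqrt (real n) \<ge> 0" for n by simp
  define \<zeta> where "\<zeta> = (\<lambda>r k j. \<Sum>i=1..N div Nlb. \<eta> r ((N div Nlb) * (k - 1) + i) j)"
  have c1: "oP1 Q (\<lambda>n \<omega>. Tlb P0 Nlb mlb flb n (eps n \<omega>)
             - real Nlb * (\<Sum>k=1..Nlb. (Ycal P0 msum fsm mlb flb Nlb Lsb K fsb \<alpha> N s h n (eps n \<omega>) k (K + 1))\<^sup>2))"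
  proof (rule oP1_tight[OF Q _ C_sqrt_0 _ Um tight'])
    show "\<forall>n\<ge>n0. \<forall>\<omega>\<in>space (Q n). \<bar>Tlb P0 Nlb mlb flb n (eps n \<omega>)
             - real Nlb * (\<Sum>k=1..Nlb. (Ycal P0 msum fsm mlb flb Nlb Lsb K fsb \<alpha> N s h n (eps n \<omega>) k (K + 1))\<^sup>2)\<bar>
         \<le> Clb * real Nlb / sqrt (real n) * (1 + \<bar>norm (Phi (Xv n \<omega>))\<bar>)"
      using bounds(2) unfolding Phi_X by simp
    show "0 \<le> Clb * real Nlb / sqrt (real n)" for n using Clb_nn by simp
  qed
  have c2: "oP1 Q (\<lambda>n \<omega>. Tsb P0 Lsb K fsb \<alpha> n (eps n \<omega>)
             - real Lsb * (\<Sum>j=0..K. (\<Sum>k=1..Nlb. Ycal P0 msum fsm mlb flb Nlb Lsb K fsb \<alpha> N s h n (eps n \<omega>) k j)\<^sup>2))"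
  proof (rule oP1_tight[OF Q _ C_sqrt_0 _ Um tight'])
    show "\<forall>n\<ge>n0. \<forall>\<omega>\<in>space (Q n). \<bar>Tsb P0 Lsb K fsb \<alpha> n (eps n \<omega>)
             - real Lsb * (\<Sum>j=0..K. (\<Sum>k=1..Nlb. Ycal P0 msum fsm mlb flb Nlb Lsb K fsb \<alpha> N s h n (eps n \<omega>) k j)\<^sup>2)\<bar>
         \<le> Csbt / sqrt (real n) * (1 + \<bar>norm (Phi (Xv n \<omega>))\<bar>)"
      using bounds(3) unfolding Phi_X by simp
    show "0 \<le> Csbt / sqrt (real n)" for n using Csbt_nn by simp
  qed
  have c3: "conv_distr Q
          (\<lambda>n \<omega>. vec_on ({1..Nlb} \<times> {0..K + 2})
                   (\<lambda>(k, j). Ycal P0 msum fsm mlb flb Nlb Lsb K fsb \<alpha> N s h n (eps n \<omega>) k j))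
          (supp_on ({1..Nlb} \<times> {0..K + 2}))
          R (\<lambda>r. vec_on ({1..Nlb} \<times> {0..K + 2}) (\<lambda>(k, j). \<zeta> r k j))"
  proof -
    have "conv_distr Q (\<lambda>n \<omega>. Psi (Xv n \<omega>)) (supp_on YS) R (\<lambda>r. Psi (W r))"
      by (rule conv_map[OF cd Psi_cont Psi_im])
    moreover have "(\<lambda>n \<omega>. Psi (Xv n \<omega>)) = (\<lambda>n \<omega>. vec_on ({1..Nlb} \<times> {0..K + 2})
                   (\<lambda>(k, j). Ycal P0 msum fsm mlb flb Nlb Lsb K fsb \<alpha> N s h n (eps n \<omega>) k j))"
      by (intro ext) (simp add: Psi_X YS_def)
    moreover have "(\<lambda>r. Psi (W r)) = (\<lambda>r. vec_on ({1..Nlb} \<times> {0..K + 2}) (\<lambda>(k, j). \<zeta> r k j))"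
      by (intro ext) (simp add: W_def Psi_vec YS_def \<zeta>_def q_def)
    ultimately show ?thesis unfolding YS_def by simp
  qed
  have c4: "conv_distr Q
          (\<lambda>n \<omega>. (Tsum P0 msum fsm n (eps n \<omega>), Tlb P0 Nlb mlb flb n (eps n \<omega>), Tsb P0 Lsb K fsb \<alpha> n (eps n \<omega>)))
          UNIV
          R (\<lambda>r. ((\<Sum>k=1..Nlb. \<zeta> r k (K + 2)),
                  real Nlb * (\<Sum>k=1..Nlb. (\<zeta> r k (K + 1))\<^sup>2),
                  real Lsb * (\<Sum>j=0..K. (\<Sum>k=1..Nlb. \<zeta> r k j)\<^sup>2)))"
  proof -
    have "conv_distr Q (\<lambda>n \<omega>. (Tsum P0 msum fsm n (eps n \<omega>), Tlb P0 Nlb mlb flb n (eps n \<omega>), Tsb P0 Lsb K fsb \<alpha> n (eps n \<omega>)))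
          UNIV R (\<lambda>r. Phi (W r))"
    proof (rule slutsky[where Q=Q and V=Xv and S="supp_on NS" and R=R and W=W and c="\<lambda>n. Call / sqrt (real n)"])
      show "prob_space (Q n)" for n by (rule Q)
      show "conv_distr Q Xv (supp_on NS) R W" by (rule cd)
      show "continuous_on (supp_on NS) Phi" by (rule Phi_cont)
      show "(\<lambda>\<omega>. Phi (Xv n \<omega>)) \<in> borel_measurable (Q n)" for n by (rule PhiX_meas)
      show "\<forall>\<epsilon>>0. \<exists>M. eventually (\<lambda>n. measure (Q n) {\<omega> \<in> space (Q n). M < \<bar>norm (Phi (Xv n \<omega>))\<bar>} \<le> \<epsilon>) sequentially"
        by (rule tight')
      show "(\<lambda>n. Call / sqrt (real n)) \<longlonglongrightarrow> 0" by (rule C_sqrt_0)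
      show "(\<lambda>\<omega>. (Tsum P0 msum fsm n (eps n \<omega>), Tlb P0 Nlb mlb flb n (eps n \<omega>), Tsb P0 Lsb K fsb \<alpha> n (eps n \<omega>)))
          \<in> borel_measurable (Q n)" for n
        by (intro borel_measurable_Pair Tsum_meas Tlb_meas Tsb_meas)
      show "0 \<le> Call / sqrt (real n)" for n unfolding Call_def using Clb_nn Csbt_nn by simp
      show "\<forall>n\<ge>n0. \<forall>\<omega>\<in>space (Q n). dist (Tsum P0 msum fsm n (eps n \<omega>), Tlb P0 Nlb mlb flb n (eps n \<omega>), Tsb P0 Lsb K fsb \<alpha> n (eps n \<omega>))
          (Phi (Xv n \<omega>)) \<le> Call / sqrt (real n) * (1 + norm (Phi (Xv n \<omega>)))"
      proof (intro allI impI ballI)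
        fix n \<omega> assume n: "n \<ge> n0" and \<omega>: "\<omega> \<in> space (Q n)"
        note b = bounds[OF n \<omega>]
        obtain a b' c where P: "Phi (Xv n \<omega>) = (a, b', c)" by (cases "Phi (Xv n \<omega>)") auto
        have "dist (Tsum P0 msum fsm n (eps n \<omega>), Tlb P0 Nlb mlb flb n (eps n \<omega>), Tsb P0 Lsb K fsb \<alpha> n (eps n \<omega>))
          (Phi (Xv n \<omega>)) \<le> \<bar>Tsum P0 msum fsm n (eps n \<omega>) - a\<bar> + \<bar>Tlb P0 Nlb mlb flb n (eps n \<omega>) - b'\<bar> + \<bar>Tsb P0 Lsb K fsb \<alpha> n (eps n \<omega>) - c\<bar>"
          unfolding P by (rule dist_triple)
        also have "\<dots> \<le> \<bar>Cs\<bar> / sqrt (real n) * (1 + norm (Phi (Xv n \<omega>)))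
            + Clb * real Nlb / sqrt (real n) * (1 + norm (Phi (Xv n \<omega>)))
            + Csbt / sqrt (real n) * (1 + norm (Phi (Xv n \<omega>)))"
          using b unfolding P by simp
        also have "\<dots> = Call / sqrt (real n) * (1 + norm (Phi (Xv n \<omega>)))"
          unfolding Call_def by (simp add: add_divide_distrib distrib_right)
        finally show "dist (Tsum P0 msum fsm n (eps n \<omega>), Tlb P0 Nlb mlb flb n (eps n \<omega>), Tsb P0 Lsb K fsb \<alpha> n (eps n \<omega>))
          (Phi (Xv n \<omega>)) \<le> Call / sqrt (real n) * (1 + norm (Phi (Xv n \<omega>)))" .
      qed
    qed
    moreover have "(\<lambda>r. Phi (W r)) = (\<lambda>r. ((\<Sum>k=1..Nlb. \<zeta> r k (K + 2)),
                  real Nlb * (\<Sum>k=1..Nlb. (\<zeta> r k (K + 1))\<^sup>2),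
                  real Lsb * (\<Sum>j=0..K. (\<Sum>k=1..Nlb. \<zeta> r k j)\<^sup>2)))"
      by (intro ext) (simp add: PhiW \<zeta>_def q_def)
    ultimately show ?thesis by simp
  qed
  show "let \<zeta> = (\<lambda>r k j. \<Sum>i=1..N div Nlb. \<eta> r ((N div Nlb) * (k - 1) + i) j) in
        oP1 Q (\<lambda>n \<omega>. Tlb P0 Nlb mlb flb n (eps n \<omega>)
             - real Nlb * (\<Sum>k=1..Nlb. (Ycal P0 msum fsm mlb flb Nlb Lsb K fsb \<alpha> N s h n (eps n \<omega>) k (K + 1))\<^sup>2))
      \<and> oP1 Q (\<lambda>n \<omega>. Tsb P0 Lsb K fsb \<alpha> n (eps n \<omega>)
             - real Lsb * (\<Sum>j=0..K. (\<Sum>k=1..Nlb. Ycal P0 msum fsm mlb flb Nlb Lsb K fsb \<alpha> N s h n (eps n \<omega>) k j)\<^sup>2))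
      \<and> conv_distr Q
          (\<lambda>n \<omega>. vec_on ({1..Nlb} \<times> {0..K + 2})
                   (\<lambda>(k, j). Ycal P0 msum fsm mlb flb Nlb Lsb K fsb \<alpha> N s h n (eps n \<omega>) k j))
          (supp_on ({1..Nlb} \<times> {0..K + 2}))
          R (\<lambda>r. vec_on ({1..Nlb} \<times> {0..K + 2}) (\<lambda>(k, j). \<zeta> r k j))
      \<and> conv_distr Q
          (\<lambda>n \<omega>. (Tsum P0 msum fsm n (eps n \<omega>), Tlb P0 Nlb mlb flb n (eps n \<omega>), Tsb P0 Lsb K fsb \<alpha> n (eps n \<omega>)))
          UNIV
          R (\<lambda>r. ((\<Sum>k=1..Nlb. \<zeta> r k (K + 2)),
                  real Nlb * (\<Sum>k=1..Nlb. (\<zeta> r k (K + 1))\<^sup>2),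
                  real Lsb * (\<Sum>j=0..K. (\<Sum>k=1..Nlb. \<zeta> r k j)\<^sup>2)))"
    unfolding Let_def \<zeta>_def[symmetric] using c1 c2 c3 c4 by blast
qed

end

theorem theorem1:
  fixes X :: "'a::euclidean_space set"
    and P0 :: "'a measure"
    and msum mlb Nlb Lsb K :: nat
    and fsm flb fsb :: "(nat \<Rightarrow> 'a) \<Rightarrow> real"
    and \<alpha> :: "nat \<Rightarrow> real set"
    and N s h :: nat
    and Q :: "nat \<Rightarrow> 'w measure"
    and eps :: "nat \<Rightarrow> 'w \<Rightarrow> nat \<Rightarrow> 'a"
  assumes P0: "prob_space P0" "sets P0 = sets (restrict_space borel X)"
    and pos: "msum \<ge> 1" "mlb \<ge> 1" "Nlb \<ge> 1" "Lsb \<ge> 1" "K \<ge> 1"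
    and fsm_meas: "fsm \<in> borel_measurable (PiM {..<msum} (\<lambda>_. restrict_space borel X))"
    and fsm_bdd: "\<exists>B. \<forall>\<theta> \<in> space (PiM {..<msum} (\<lambda>_. restrict_space borel X)). \<bar>fsm \<theta>\<bar> \<le> B"
    and flb_meas: "flb \<in> borel_measurable (PiM {..<mlb} (\<lambda>_. restrict_space borel X))"
    and flb_bdd: "\<exists>B. \<forall>\<theta> \<in> space (PiM {..<mlb} (\<lambda>_. restrict_space borel X)). \<bar>flb \<theta>\<bar> \<le> B"
    and fsb_meas: "fsb \<in> borel_measurable (PiM {..<Lsb} (\<lambda>_. restrict_space borel X))"
    and \<alpha>_meas: "\<And>j. j \<le> K \<Longrightarrow> \<alpha> j \<in> sets borel"
    and \<alpha>_ne: "\<And>j. j \<le> K \<Longrightarrow> \<alpha> j \<noteq> {}"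
    and \<alpha>_disj: "\<And>i j. i \<le> K \<Longrightarrow> j \<le> K \<Longrightarrow> i \<noteq> j \<Longrightarrow> \<alpha> i \<inter> \<alpha> j = {}"
    and \<alpha>_cover: "(\<Union>j\<in>{0..K}. \<alpha> j) = fsb ` space (PiM {..<Lsb} (\<lambda>_. restrict_space borel X))"
    and sig_sum: "sig2H0 P0 msum fsm > 0"
    and sig_lb: "sig2H0 P0 mlb flb > 0"
    and Esb_pos: "\<And>j. j \<le> K \<Longrightarrow> Esb P0 Lsb fsb \<alpha> j > 0"
    and Nsh: "N \<ge> 1" "s \<ge> 1" "h \<ge> 1" "s \<ge> h + max msum mlb - 1" "Nlb dvd N" "Lsb dvd h"
    and Q: "\<And>n. prob_space (Q n)"
    and eps_meas: "\<And>n i. i \<in> {1..n} \<Longrightarrow> (\<lambda>\<omega>. eps n \<omega> i) \<in> measurable (Q n) (restrict_space borel X)"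
  shows
   "oP1 Q (\<lambda>n \<omega>. Tsum P0 msum fsm n (eps n \<omega>)
             - (\<Sum>k=1..Nlb. Ycal P0 msum fsm mlb flb Nlb Lsb K fsb \<alpha> N s h n (eps n \<omega>) k (K + 2)))
    \<and>
    (\<forall>(R :: 'r measure) (\<eta> :: 'r \<Rightarrow> nat \<Rightarrow> nat \<Rightarrow> real).
      prob_space R
      \<and> (\<forall>k j. (\<lambda>r. \<eta> r k j) \<in> borel_measurable R)
      \<and> conv_distr Q
          (\<lambda>n \<omega>. vec_on ({1..N} \<times> {0..K + 2})
                   (\<lambda>(k, j). Xcal P0 msum fsm mlb flb Lsb K fsb \<alpha> N s h n (eps n \<omega>) k j))
          (supp_on ({1..N} \<times> {0..K + 2}))
          R (\<lambda>r. vec_on ({1..N} \<times> {0..K + 2}) (\<lambda>(k, j). \<eta> r k j))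
      \<longrightarrow>
      (let \<zeta> = (\<lambda>r k j. \<Sum>i=1..N div Nlb. \<eta> r ((N div Nlb) * (k - 1) + i) j) in
        oP1 Q (\<lambda>n \<omega>. Tlb P0 Nlb mlb flb n (eps n \<omega>)
             - real Nlb * (\<Sum>k=1..Nlb. (Ycal P0 msum fsm mlb flb Nlb Lsb K fsb \<alpha> N s h n (eps n \<omega>) k (K + 1))\<^sup>2))
      \<and> oP1 Q (\<lambda>n \<omega>. Tsb P0 Lsb K fsb \<alpha> n (eps n \<omega>)
             - real Lsb * (\<Sum>j=0..K. (\<Sum>k=1..Nlb. Ycal P0 msum fsm mlb flb Nlb Lsb K fsb \<alpha> N s h n (eps n \<omega>) k j)\<^sup>2))
      \<and> conv_distr Q
          (\<lambda>n \<omega>. vec_on ({1..Nlb} \<times> {0..K + 2})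
                   (\<lambda>(k, j). Ycal P0 msum fsm mlb flb Nlb Lsb K fsb \<alpha> N s h n (eps n \<omega>) k j))
          (supp_on ({1..Nlb} \<times> {0..K + 2}))
          R (\<lambda>r. vec_on ({1..Nlb} \<times> {0..K + 2}) (\<lambda>(k, j). \<zeta> r k j))
      \<and> conv_distr Q
          (\<lambda>n \<omega>. (Tsum P0 msum fsm n (eps n \<omega>), Tlb P0 Nlb mlb flb n (eps n \<omega>), Tsb P0 Lsb K fsb \<alpha> n (eps n \<omega>)))
          UNIV
          R (\<lambda>r. ((\<Sum>k=1..Nlb. \<zeta> r k (K + 2)),
                  real Nlb * (\<Sum>k=1..Nlb. (\<zeta> r k (K + 1))\<^sup>2),
                  real Lsb * (\<Sum>j=0..K. (\<Sum>k=1..Nlb. \<zeta> r k j)\<^sup>2)))))"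
proof -
  interpret Tctx X P0 msum mlb Nlb Lsb K fsm flb fsb \<alpha> N s h Q eps
    by (rule Tctx.intro) (fact+)
  show ?thesis by (rule main)
qed

end
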